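(* The relation $\equiv_m$ of $m$-equivalence on $2^\mathbb{N}$ is $\Pi^0_2$-graphable with diameter $2$.
   Context: Subsets of $\mathbb{N}$ are identified with elements of $2^\mathbb{N}$. An $m$-reduction from $A$ to $B$ is a total computable $f:\mathbb{N}\to\mathbb{N}$ with $n\in A\iff f(n)\in B$ for all $n$; $A\le_m B$ if one exists, and $A\equiv_m B$ iff $A\le_m B$ and $B\le_m A$. An equivalence relation $E$ on a space $X$ is $\Gamma$-graphable (for a pointclass $\Gamma$, here lightface $\Pi^0_2$) if there is a simple undirected graph $G\subseteq X\times X$ in $\Gamma$ whose connectedness relation equals $E$; it is $\Gamma$-graphable with diameter $k$ if such a $G$ exists in which $k$ is the least integer such that any two $G$-connected points are joined by a path of length at most $k$. *)

theory Defs
  imports Main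
begin

text \<open>A function of arity n is a function on
nat lists; only its values on lists of length n matter.\<close>

inductive total_rec :: "nat \<Rightarrow> (nat list \<Rightarrow> nat) \<Rightarrow> bool" where
  zero: "total_rec n (\<lambda>xs. 0)"
| succ: "total_rec 1 (\<lambda>xs. Suc (hd xs))"
| proj: "i < n \<Longrightarrow> total_rec n (\<lambda>xs. xs ! i)"
| comp: "total_rec m f \<Longrightarrow> length gs = m \<Longrightarrow> (\<forall>i<m. total_rec n (gs ! i))
          \<Longrightarrow> total_rec n (\<lambda>xs. f (map (\<lambda>g. g xs) gs))"
| prim: "total_rec n g \<Longrightarrow> total_rec (Suc (Suc n)) h
          \<Longrightarrow> total_rec (Suc n)
                (\<lambda>xs. rec_nat (g (tl xs)) (\<lambda>k r. h (k # r # tl xs)) (hd xs))"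
| mini: "total_rec (Suc n) g \<Longrightarrow> (\<forall>xs. length xs = n \<longrightarrow> (\<exists>y. g (y # xs) = 0))
          \<Longrightarrow> total_rec n (\<lambda>xs. LEAST y. g (y # xs) = 0)"
| ext: "total_rec n f \<Longrightarrow> (\<forall>xs. length xs = n \<longrightarrow> f xs = f' xs) \<Longrightarrow> total_rec n f'"

definition computable :: "(nat \<Rightarrow> nat) \<Rightarrow> bool" where
  "computable f \<longleftrightarrow> total_rec 1 (\<lambda>xs. f (hd xs))"

definition m_reduces :: "(nat \<Rightarrow> bool) \<Rightarrow> (nat \<Rightarrow> bool) \<Rightarrow> bool" where
  "m_reduces A B \<longleftrightarrow> (\<exists>f. computable f \<and> (\<forall>n. A n \<longleftrightarrow> B (f n)))"

definition m_equiv :: "(nat \<Rightarrow> bool) \<Rightarrow> (nat \<Rightarrow> bool) \<Rightarrow> bool" where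
  "m_equiv A B \<longleftrightarrow> m_reduces A B \<and> m_reduces B A"

text \<open>Code of the initial segment X restricted to {0..<m}, as a natural number
(injective coding of finite binary strings).\<close>

definition prefix_code :: "(nat \<Rightarrow> bool) \<Rightarrow> nat \<Rightarrow> nat" where
  "prefix_code X m = 2 ^ m + (\<Sum>i<m. if X i then 2 ^ i else 0)"

text \<open>Lightface Pi^0_2 subsets of 2^N x 2^N, in normal form:
(X,Y) in P iff for all n there is m with R(n, X|m, Y|m), R computable.\<close>

definition Pi02_pairs :: "((nat \<Rightarrow> bool) \<times> (nat \<Rightarrow> bool)) set \<Rightarrow> bool" where
  "Pi02_pairs P \<longleftrightarrow> (\<exists>r. total_rec 3 r \<and>
     (\<forall>X Y. (X, Y) \<in> P \<longleftrightarrow>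
        (\<forall>n. \<exists>m. r [n, prefix_code X m, prefix_code Y m] = 0)))"

definition simple_graph :: "'a rel \<Rightarrow> bool" where
  "simple_graph G \<longleftrightarrow> sym G \<and> irrefl G"

definition diam_bounded :: "'a rel \<Rightarrow> nat \<Rightarrow> bool" where
  "diam_bounded G k \<longleftrightarrow> (\<forall>x y. (x, y) \<in> G\<^sup>* \<longrightarrow> (\<exists>j\<le>k. (x, y) \<in> G ^^ j))"

definition has_diameter :: "'a rel \<Rightarrow> nat \<Rightarrow> bool" where
  "has_diameter G k \<longleftrightarrow> diam_bounded G k \<and> (\<forall>k'<k. \<not> diam_bounded G k')"

definition Pi02_graphable_diam ::
  "((nat \<Rightarrow> bool) \<Rightarrow> (nat \<Rightarrow> bool) \<Rightarrow> bool) \<Rightarrow> nat \<Rightarrow> bool" where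
  "Pi02_graphable_diam E k \<longleftrightarrow> (\<exists>G. Pi02_pairs G \<and> simple_graph G
      \<and> G\<^sup>* = {(x, y). E x y} \<and> has_diameter G k)"

end

theory Submission
  imports Defs "HOL-Library.Nat_Bijection"
begin

section \<open>n-ary basics\<close>

lemma tr_ext: "total_rec n f \<Longrightarrow> (\<And>xs. length xs = n \<Longrightarrow> f xs = g xs) \<Longrightarrow> total_rec n g"
  using total_rec.ext by blast

lemma tr_comp1:
  assumes "total_rec 1 (\<lambda>ys. f (hd ys))" "total_rec n g"
  shows "total_rec n (\<lambda>xs. f (g xs))"
  using total_rec.comp[of 1 "\<lambda>ys. f (hd ys)" "[g]" n] assms by simp

lemma tr_comp2:
  assumes "total_rec 2 (\<lambda>ys. f (ys!0) (ys!1))" "total_rec n g" "total_rec n h"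
  shows "total_rec n (\<lambda>xs. f (g xs) (h xs))"
proof -
  have "\<forall>i<2. total_rec n ([g,h] ! i)" using assms(2,3) by (auto simp: less_2_cases_iff)
  then show ?thesis using total_rec.comp[of 2 "\<lambda>ys. f (ys!0) (ys!1)" "[g,h]" n] assms(1) by simp
qed

lemma tr_proj: "i < n \<Longrightarrow> total_rec n (\<lambda>xs. xs ! i)"
  by (rule total_rec.proj)

lemma tr_hd: "total_rec 1 (\<lambda>xs. hd xs)"
  by (rule tr_ext[OF tr_proj[of 0 1]]) (auto simp: length_Suc_conv)

lemma tr_succ: "total_rec 1 (\<lambda>xs. Suc (hd xs))"
  by (rule total_rec.succ)

lemma tr_const: "total_rec n (\<lambda>xs. c)"
proof (induction c)
  case 0 then show ?case by (rule total_rec.zero)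
next
  case (Suc c) then show ?case using tr_comp1[where f=Suc, OF tr_succ] by blast
qed

lemma len2: "length xs = 2 \<Longrightarrow> xs = [xs!0, xs!1]"
  by (cases xs; cases "tl xs"; auto)

lemma len3: "length xs = 3 \<Longrightarrow> xs = [xs!0, xs!1, xs!2]"
  by (cases xs; cases "tl xs"; cases "tl (tl xs)"; auto)

lemma prim_ext:
  assumes "total_rec n g" "total_rec m h" "m = Suc (Suc n)" "k = Suc n"
    "\<And>xs. length xs = k \<Longrightarrow> rec_nat (g (tl xs)) (\<lambda>k r. h (k # r # tl xs)) (hd xs) = F xs"
  shows "total_rec k F"
proof -
  have 1: "total_rec k (\<lambda>xs. rec_nat (g (tl xs)) (\<lambda>k r. h (k # r # tl xs)) (hd xs))"
    using total_rec.prim[OF assms(1), of h] assms(2-4) by simp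
  show ?thesis by (rule tr_ext[OF 1 assms(5)])
qed

lemma mini_ext:
  assumes "total_rec m g" "m = Suc n" "\<And>xs. length xs = n \<Longrightarrow> \<exists>y. g (y # xs) = 0"
    "\<And>xs. length xs = n \<Longrightarrow> (LEAST y. g (y # xs) = 0) = F xs"
  shows "total_rec n F"
proof -
  have "total_rec n (\<lambda>xs. LEAST y. g (y # xs) = 0)" using total_rec.mini[of n g] assms(1-3) by blast
  then show ?thesis by (rule tr_ext) (rule assms(4))
qed

lemma l2: "length xs = 2 \<Longrightarrow> \<exists>a b. xs = [a,b]"
  by (metis len2)

lemma recnat_add: "rec_nat b (\<lambda>k r. Suc r) a = a + b"
  by (induction a) auto

lemma tr_add: "total_rec 2 (\<lambda>ys. ys!0 + ys!1)"
proof -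
  have h: "total_rec 3 (\<lambda>zs. Suc (zs!1))" using tr_comp1[where f=Suc, OF tr_succ tr_proj[of 1 3]] by simp
  show ?thesis
    by (rule prim_ext[OF tr_hd h]) (auto dest!: l2 simp: recnat_add)
qed

lemma recnat_tri: "rec_nat 0 (\<lambda>k r. Suc (r + k)) a = triangle a"
  by (induction a) auto

lemma tr_tri: "total_rec 1 (\<lambda>ys. triangle (hd ys))"
proof -
  have h: "total_rec 2 (\<lambda>zs. zs!1 + Suc (zs!0))"
    using tr_comp2[where f="(+)", OF tr_add tr_proj[of 1 2] tr_comp1[where f=Suc, OF tr_succ tr_proj[of 0 2]]] by simp
  show ?thesis
    by (rule prim_ext[OF total_rec.zero[of 0] h]) (auto simp: recnat_tri)
qed

lemma recnat_pred: "rec_nat 0 (\<lambda>k r. k) a = a - 1"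
  by (induction a) auto

lemma tr_pred: "total_rec 1 (\<lambda>ys. hd ys - 1)"
  by (rule prim_ext[OF total_rec.zero[of 0] tr_proj[of 0 2]]) (auto simp: recnat_pred)

lemma recnat_sub: "rec_nat b (\<lambda>k r. r - Suc 0) a = b - a"
  by (induction a) auto

lemma tr_sub: "total_rec 2 (\<lambda>ys. ys!0 - ys!1)"
proof -
  have h: "total_rec 3 (\<lambda>zs. zs!1 - 1)" using tr_comp1[where f="\<lambda>x. x - 1", OF tr_pred tr_proj[of 1 3]] by simp
  have a: "total_rec 2 (\<lambda>ys. (\<lambda>a b. b - a) (ys!0) (ys!1))"
    by (rule prim_ext[OF tr_hd h]) (auto dest!: l2 simp: recnat_sub)
  from tr_comp2[OF a tr_proj[of 1 2] tr_proj[of 0 2]] show ?thesis by simp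
qed

definition cpair :: "nat \<Rightarrow> nat \<Rightarrow> nat" where "cpair a b = prod_encode (a, b)"
definition cfst :: "nat \<Rightarrow> nat" where "cfst p = fst (prod_decode p)"
definition csnd :: "nat \<Rightarrow> nat" where "csnd p = snd (prod_decode p)"

lemma cfst_cpair[simp]: "cfst (cpair a b) = a" by (simp add: cfst_def cpair_def)
lemma csnd_cpair[simp]: "csnd (cpair a b) = b" by (simp add: csnd_def cpair_def)
lemma cpair_split[simp]: "cpair (cfst p) (csnd p) = p" by (simp add: cfst_def csnd_def cpair_def)
lemma cpair_eq[simp]: "cpair a b = cpair c d \<longleftrightarrow> a = c \<and> b = d"
  by (metis cfst_cpair csnd_cpair)
lemma cpair_ge1: "a \<le> cpair a b" by (simp add: cpair_def le_prod_encode_1)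
lemma cpair_ge2: "b \<le> cpair a b" by (simp add: cpair_def le_prod_encode_2)

lemma tr_cpair: "total_rec 2 (\<lambda>ys. cpair (ys!0) (ys!1))"
proof -
  have "total_rec 2 (\<lambda>ys. ys!0 + ys!1)" by (rule tr_add)
  then have t: "total_rec 2 (\<lambda>ys. triangle (ys!0 + ys!1))"
    using tr_comp1[where f=triangle, OF tr_tri] by blast
  have "total_rec 2 (\<lambda>ys. triangle (ys!0 + ys!1) + ys!0)"
    using tr_comp2[where f="(+)", OF tr_add t tr_proj[of 0 2]] by simp
  then show ?thesis by (simp add: cpair_def prod_encode_def)
qed

lemma triangle_mono: "a \<le> b \<Longrightarrow> triangle a \<le> triangle b"
  by (induction b) (auto simp: le_Suc_eq)

definition kk :: "nat \<Rightarrow> nat" where "kk p = (LEAST k. p < triangle (Suc k))"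

lemma kk_cpair: "kk (triangle (m + n) + m) = m + n"
  unfolding kk_def
proof (rule Least_equality)
  show "triangle (m + n) + m < triangle (Suc (m + n))" by simp
  fix y assume a: "triangle (m + n) + m < triangle (Suc y)"
  show "m + n \<le> y"
  proof (rule ccontr)
    assume "\<not> m + n \<le> y"
    then have "Suc y \<le> m + n" by simp
    then have "triangle (Suc y) \<le> triangle (m+n)" by (rule triangle_mono)
    then show False using a by simp
  qed
qed

lemma cfst_kk: "cfst p = p - triangle (kk p)"
proof -
  obtain m n where p: "prod_decode p = (m, n)" by (cases "prod_decode p")
  then have "p = prod_encode (m, n)" by (metis prod_decode_inverse)
  then show ?thesis using p by (simp add: cfst_def kk_cpair prod_encode_def)
qed

lemma csnd_kk: "csnd p = kk p - (p - triangle (kk p))"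
proof -
  obtain m n where p: "prod_decode p = (m, n)" by (cases "prod_decode p")
  then have "p = prod_encode (m, n)" by (metis prod_decode_inverse)
  then show ?thesis using p by (simp add: csnd_def kk_cpair prod_encode_def)
qed

lemma tr_kk: "total_rec 1 (\<lambda>ys. kk (hd ys))"
proof -
  have a: "total_rec 2 (\<lambda>ys. Suc (ys!1))" using tr_comp1[where f=Suc, OF tr_succ tr_proj[of 1 2]] by simp
  have b0: "total_rec 2 (\<lambda>ys. Suc (ys!0))" using tr_comp1[where f=Suc, OF tr_succ tr_proj[of 0 2]] by simp
  have b: "total_rec 2 (\<lambda>ys. triangle (Suc (ys!0)))" using tr_comp1[where f=triangle, OF tr_tri b0] by simp
  have g: "total_rec 2 (\<lambda>ys. Suc (ys!1) - triangle (Suc (ys!0)))"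
    using tr_comp2[where f="(-)", OF tr_sub a b] by simp
  have tri: "Suc p \<le> triangle (Suc p)" for p by (induction p) auto
  show ?thesis
  proof (rule mini_ext[OF g])
    fix xs :: "nat list" assume "length xs = 1"
    then obtain p where xs: "xs = [p]" by (cases xs) auto
    show "\<exists>y. Suc ((y # xs)!1) - triangle (Suc ((y # xs)!0)) = 0"
      using tri[of p] by (intro exI[of _ p]) (simp add: xs)
    show "(LEAST y. Suc ((y # xs)!1) - triangle (Suc ((y # xs)!0)) = 0) = kk (hd xs)"
      by (simp add: xs kk_def less_Suc_eq_le)
  qed simp
qed

section \<open>Unary computability algebra\<close>

lemma c_id: "computable (\<lambda>x. x)"
  unfolding computable_def by (rule tr_hd)

lemma c_const: "computable (\<lambda>x. c)"
  unfolding computable_def by (rule tr_const)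

lemma c_comp: "computable f \<Longrightarrow> computable g \<Longrightarrow> computable (\<lambda>x. f (g x))"
  unfolding computable_def using tr_comp1 by blast

lemma c_bin: "total_rec 2 (\<lambda>ys. F (ys!0) (ys!1)) \<Longrightarrow> computable a \<Longrightarrow> computable b \<Longrightarrow>
   computable (\<lambda>x. F (a x) (b x))"
  unfolding computable_def using tr_comp2 by blast

lemma c_Suc: "computable f \<Longrightarrow> computable (\<lambda>x. Suc (f x))"
  unfolding computable_def using tr_comp1[where f=Suc, OF tr_succ] by blast

lemma c_add: "computable f \<Longrightarrow> computable g \<Longrightarrow> computable (\<lambda>x. f x + g x)"
  using c_bin[where F="(+)", OF tr_add] by blast

lemma c_sub: "computable f \<Longrightarrow> computable g \<Longrightarrow> computable (\<lambda>x. f x - g x)"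
  using c_bin[where F="(-)", OF tr_sub] by blast

lemma c_cpair: "computable f \<Longrightarrow> computable g \<Longrightarrow> computable (\<lambda>x. cpair (f x) (g x))"
  using c_bin[where F="cpair", OF tr_cpair] by blast

lemma c_triangle: "computable f \<Longrightarrow> computable (\<lambda>x. triangle (f x))"
  using c_comp[where f=triangle] tr_tri unfolding computable_def by blast

lemma c_kk: "computable f \<Longrightarrow> computable (\<lambda>x. kk (f x))"
  using c_comp[where f=kk] tr_kk unfolding computable_def by blast

lemma c_cfst: "computable f \<Longrightarrow> computable (\<lambda>x. cfst (f x))"
  unfolding cfst_kk by (intro c_sub c_triangle c_kk)

lemma c_csnd: "computable f \<Longrightarrow> computable (\<lambda>x. csnd (f x))"
  unfolding csnd_kk by (intro c_sub c_triangle c_kk)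

lemma c_prim0:
  assumes "computable g" "computable h"
  shows "computable (\<lambda>p. rec_nat (g (csnd p)) (\<lambda>k r. h (cpair k (cpair r (csnd p)))) (cfst p))"
proof -
  have G: "total_rec 1 (\<lambda>ys. g (hd ys))" using assms(1) by (simp add: computable_def)
  have H0: "total_rec 3 (\<lambda>zs. cpair (zs!0) (cpair (zs!1) (zs!2)))"
    using tr_comp2[where f=cpair, OF tr_cpair tr_proj[of 0 3] tr_comp2[where f=cpair, OF tr_cpair tr_proj[of 1 3] tr_proj[of 2 3]]]
    by simp
  have H: "total_rec 3 (\<lambda>zs. h (cpair (zs!0) (cpair (zs!1) (zs!2))))"
    using tr_comp1[where f=h, OF _ H0] assms(2) by (simp add: computable_def)
  have "total_rec 2 (\<lambda>ys. (\<lambda>a b. rec_nat (g b) (\<lambda>k r. h (cpair k (cpair r b))) a) (ys!0) (ys!1))"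
    by (rule prim_ext[OF G H]) (auto dest!: l2)
  from c_bin[OF this c_cfst[OF c_id] c_csnd[OF c_id]] show ?thesis by simp
qed

lemma c_mini0:
  assumes "computable q" "\<And>x. \<exists>y. q (cpair y x) = 0"
  shows "computable (\<lambda>x. LEAST y. q (cpair y x) = 0)"
proof -
  have g: "total_rec 2 (\<lambda>ys. q (cpair (ys!0) (ys!1)))"
    using tr_comp1[where f=q, OF _ tr_cpair] assms(1) by (simp add: computable_def)
  show ?thesis unfolding computable_def
  proof (rule mini_ext[OF g])
    fix xs :: "nat list" assume "length xs = 1"
    then obtain p where xs: "xs = [p]" by (cases xs) auto
    show "\<exists>y. q (cpair ((y # xs)!0) ((y # xs)!1)) = 0" using assms(2) by (simp add: xs)
    show "(LEAST y. q (cpair ((y # xs)!0) ((y # xs)!1)) = 0) = (LEAST y. q (cpair y (hd xs)) = 0)"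
      by (simp add: xs)
  qed simp
qed

lemma c_prim:
  assumes "computable (\<lambda>q. H (cfst q) (cfst (csnd q)) (csnd (csnd q)))" "computable G"
    "computable a" "computable b"
  shows "computable (\<lambda>x. rec_nat (G (b x)) (\<lambda>k r. H k r (b x)) (a x))"
proof -
  have "computable (\<lambda>p. rec_nat (G (csnd p)) (\<lambda>k r. (\<lambda>q. H (cfst q) (cfst (csnd q)) (csnd (csnd q))) (cpair k (cpair r (csnd p)))) (cfst p))"
    by (rule c_prim0[OF assms(2,1)])
  then have "computable (\<lambda>p. rec_nat (G (csnd p)) (\<lambda>k r. H k r (csnd p)) (cfst p))" by simp
  from c_comp[OF this c_cpair[OF assms(3,4)]] show ?thesis by simp
qed

lemma c_cfst_eta: "computable cfst" using c_cfst[OF c_id] by simp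
lemma c_csnd_eta: "computable csnd" using c_csnd[OF c_id] by simp
lemmas c_basic = c_id c_const c_cfst c_csnd c_cfst_eta c_csnd_eta c_add c_sub c_Suc c_cpair

lemma recnat_mult: "rec_nat 0 (\<lambda>k r. r + c) a = a * c"
  by (induction a) auto

lemma c_mult: "computable f \<Longrightarrow> computable g \<Longrightarrow> computable (\<lambda>x. f x * g x)"
proof -
  assume a: "computable f" "computable g"
  have "computable (\<lambda>x. rec_nat ((\<lambda>_. 0) (g x)) (\<lambda>k r. (\<lambda>k r y. r + y) k r (g x)) (f x))"
    by (rule c_prim) (auto intro!: c_basic a)
  then show ?thesis by (simp add: recnat_mult)
qed

lemma recnat_pow: "rec_nat (Suc 0) (\<lambda>k r. r * c) a = c ^ a"
  by (induction a) (simp_all add: power_Suc2)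

lemma c_pow: "computable f \<Longrightarrow> computable g \<Longrightarrow> computable (\<lambda>x. f x ^ g x)"
proof -
  assume a: "computable f" "computable g"
  have "computable (\<lambda>x. rec_nat ((\<lambda>_. 1) (f x)) (\<lambda>k r. (\<lambda>k r y. r * y) k r (f x)) (g x))"
    by (rule c_prim) (auto intro!: c_mult c_basic a)
  then show ?thesis by (simp add: recnat_pow)
qed

lemma recnat_funpow: "rec_nat y (\<lambda>k r. f r) n = (f ^^ n) y"
  by (induction n) auto

lemma c_funpow: "computable f \<Longrightarrow> computable a \<Longrightarrow> computable b \<Longrightarrow> computable (\<lambda>x. (f ^^ a x) (b x))"
proof -
  assume a: "computable f" "computable a" "computable b"
  have "computable (\<lambda>x. rec_nat ((\<lambda>y. y) (b x)) (\<lambda>k r. (\<lambda>k r y. f r) k r (b x)) (a x))"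
    by (rule c_prim) (auto intro!: c_comp[OF a(1)] c_basic a)
  then show ?thesis by (simp add: recnat_funpow)
qed

definition dec :: "(nat \<Rightarrow> bool) \<Rightarrow> bool" where
  "dec P \<longleftrightarrow> computable (\<lambda>x. if P x then 1 else 0)"

lemma c_if: "dec P \<Longrightarrow> computable a \<Longrightarrow> computable b \<Longrightarrow> computable (\<lambda>x. if P x then a x else b x)"
proof -
  assume d: "dec P" and a: "computable a" "computable b"
  have c: "computable (\<lambda>x. (if P x then 1 else 0) * a x + (1 - (if P x then 1 else 0)) * b x)"
    using d unfolding dec_def by (intro c_add c_mult c_sub c_const a)
  show ?thesis by (rule back_subst[where P=computable, OF c]) (auto simp: fun_eq_iff)
qed

lemma dec_eq: "computable f \<Longrightarrow> computable g \<Longrightarrow> dec (\<lambda>x. f x = g x)"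
proof -
  assume a: "computable f" "computable g"
  have c: "computable (\<lambda>x. 1 - ((f x - g x) + (g x - f x)))" by (intro c_add c_sub c_const a)
  show ?thesis unfolding dec_def by (rule back_subst[where P=computable, OF c]) (auto simp: fun_eq_iff)
qed

lemma dec_less: "computable f \<Longrightarrow> computable g \<Longrightarrow> dec (\<lambda>x. f x < g x)"
proof -
  assume a: "computable f" "computable g"
  have c: "computable (\<lambda>x. 1 - (1 - (g x - f x)))" by (intro c_add c_sub c_const a)
  show ?thesis unfolding dec_def by (rule back_subst[where P=computable, OF c]) (auto simp: fun_eq_iff)
qed

lemma dec_le: "computable f \<Longrightarrow> computable g \<Longrightarrow> dec (\<lambda>x. f x \<le> g x)"
proof -
  assume a: "computable f" "computable g"
  have c: "computable (\<lambda>x. 1 - (f x - g x))" by (intro c_add c_sub c_const a)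
  show ?thesis unfolding dec_def by (rule back_subst[where P=computable, OF c]) (auto simp: fun_eq_iff)
qed

lemma dec_not: "dec P \<Longrightarrow> dec (\<lambda>x. \<not> P x)"
proof -
  assume a: "dec P"
  have c: "computable (\<lambda>x. 1 - (if P x then 1 else 0))" using a unfolding dec_def by (intro c_sub c_const)
  show ?thesis unfolding dec_def by (rule back_subst[where P=computable, OF c]) (auto simp: fun_eq_iff)
qed

lemma dec_conj: "dec P \<Longrightarrow> dec Q \<Longrightarrow> dec (\<lambda>x. P x \<and> Q x)"
proof -
  assume a: "dec P" "dec Q"
  have c: "computable (\<lambda>x. (if P x then 1 else 0) * (if Q x then 1 else 0))" using a unfolding dec_def by (intro c_mult)
  show ?thesis unfolding dec_def by (rule back_subst[where P=computable, OF c]) (auto simp: fun_eq_iff)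
qed

lemma dec_disj: "dec P \<Longrightarrow> dec Q \<Longrightarrow> dec (\<lambda>x. P x \<or> Q x)"
proof -
  assume a: "dec P" "dec Q"
  have "dec (\<lambda>x. \<not> (\<not> P x \<and> \<not> Q x))" by (intro dec_not dec_conj a)
  then show ?thesis by simp
qed

lemma dec_imp: "dec P \<Longrightarrow> dec Q \<Longrightarrow> dec (\<lambda>x. P x \<longrightarrow> Q x)"
proof -
  assume a: "dec P" "dec Q"
  have "dec (\<lambda>x. \<not> P x \<or> Q x)" by (intro dec_not dec_disj a)
  then show ?thesis by simp
qed

lemma dec_iff: "dec P \<Longrightarrow> dec Q \<Longrightarrow> dec (\<lambda>x. P x \<longleftrightarrow> Q x)"
proof -
  assume a: "dec P" "dec Q"
  have "dec (\<lambda>x. (P x \<longrightarrow> Q x) \<and> (Q x \<longrightarrow> P x))" by (intro dec_imp dec_conj a)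
  then show ?thesis by (rule back_subst[where P=dec]) auto
qed

lemma dec_const: "dec (\<lambda>x. c)"
  unfolding dec_def by (cases c) (simp_all add: c_const)

lemma c_least:
  assumes "dec (\<lambda>p. P (cfst p) (csnd p))" "\<And>x. \<exists>y. P y x"
  shows "computable (\<lambda>x. LEAST y. P y x)"
proof -
  have q: "computable (\<lambda>p. if P (cfst p) (csnd p) then 0 else 1)"
    by (intro c_if assms(1) c_const)
  have t: "\<exists>y. (\<lambda>p. if P (cfst p) (csnd p) then 0 else 1) (cpair y x) = (0::nat)" for x
  proof -
    obtain y where "P y x" using assms(2) by blast
    then show ?thesis by (intro exI[of _ y]) simp
  qed
  have "computable (\<lambda>x. LEAST y. (\<lambda>p. if P (cfst p) (csnd p) then 0 else 1) (cpair y x) = (0::nat))"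
    by (rule c_mini0[OF q t])
  moreover have "\<And>Q. ((if Q then 0 else 1) = (0::nat)) = Q" by simp
  ultimately show ?thesis by simp
qed

lemma dec_ex_less:
  assumes "dec (\<lambda>p. P (cfst p) (csnd p))" "computable b"
  shows "dec (\<lambda>x. \<exists>y<b x. P y x)"
proof -
  have bs: "computable (\<lambda>p. b (csnd p))" by (intro c_comp[OF assms(2)] c_csnd c_id)
  have s: "computable (\<lambda>x. LEAST y. b x \<le> y \<or> P y x)"
    by (rule c_least) (auto intro!: dec_disj dec_le bs c_cfst c_id assms(1))
  have "dec (\<lambda>x. (LEAST y. b x \<le> y \<or> P y x) < b x)" by (intro dec_less s assms(2))
  moreover have "((LEAST y. b x \<le> y \<or> P y x) < b x) = (\<exists>y<b x. P y x)" for x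
  proof
    assume "(LEAST y. b x \<le> y \<or> P y x) < b x"
    moreover have "b x \<le> (LEAST y. b x \<le> y \<or> P y x) \<or> P (LEAST y. b x \<le> y \<or> P y x) x"
      by (rule LeastI[of _ "b x"]) simp
    ultimately show "\<exists>y<b x. P y x" by auto
  next
    assume "\<exists>y<b x. P y x"
    then obtain y where "y < b x" "P y x" by auto
    then have "(LEAST y. b x \<le> y \<or> P y x) \<le> y" by (intro Least_le) auto
    then show "(LEAST y. b x \<le> y \<or> P y x) < b x" using \<open>y < b x\<close> by simp
  qed
  ultimately show ?thesis by simp
qed

lemma dec_all_less:
  assumes "dec (\<lambda>p. P (cfst p) (csnd p))" "computable b"
  shows "dec (\<lambda>x. \<forall>y<b x. P y x)"
proof -
  have "dec (\<lambda>x. \<not> (\<exists>y<b x. \<not> P y x))"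
    by (intro dec_not dec_ex_less[where P="\<lambda>y x. \<not> P y x"] assms(2)) (simp add: dec_not assms(1))
  then show ?thesis by simp
qed

lemma dec_ex_le:
  assumes "dec (\<lambda>p. P (cfst p) (csnd p))" "computable b"
  shows "dec (\<lambda>x. \<exists>y\<le>b x. P y x)"
proof -
  have "dec (\<lambda>x. \<exists>y<Suc (b x). P y x)" by (intro dec_ex_less assms c_Suc)
  then show ?thesis by (simp add: less_Suc_eq_le)
qed

lemma dec_all_le:
  assumes "dec (\<lambda>p. P (cfst p) (csnd p))" "computable b"
  shows "dec (\<lambda>x. \<forall>y\<le>b x. P y x)"
proof -
  have "dec (\<lambda>x. \<forall>y<Suc (b x). P y x)" by (intro dec_all_less assms c_Suc)
  then show ?thesis by (simp add: less_Suc_eq_le)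
qed

lemma div_least: "(0::nat) < g \<Longrightarrow> (LEAST q. g = 0 \<or> f < g * Suc q) = f div g"
proof (rule Least_equality)
  assume g: "0 < g"
  show "g = 0 \<or> f < g * Suc (f div g)"
    using g by (metis dividend_less_div_times mult.commute mult_Suc_right)
  fix y assume "g = 0 \<or> f < g * Suc y"
  then have "f < g * Suc y" using g by simp
  then have "f div g < Suc y" using g by (simp add: div_less_iff_less_mult mult.commute)
  then show "f div g \<le> y" by simp
qed

lemma c_div: "computable f \<Longrightarrow> computable g \<Longrightarrow> computable (\<lambda>x. f x div g x)"
proof -
  assume a: "computable f" "computable g"
  have d: "dec (\<lambda>p. g (csnd p) = 0 \<or> f (csnd p) < g (csnd p) * Suc (cfst p))"
    by (intro dec_disj dec_eq dec_less c_mult c_Suc c_comp[OF a(1)] c_comp[OF a(2)] c_basic)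
  have tot: "\<exists>q. g x = 0 \<or> f x < g x * Suc q" for x
  proof (cases "g x = 0")
    case False
    then have "1 * Suc (f x) \<le> g x * Suc (f x)" by (intro mult_le_mono1) simp
    then show ?thesis by (intro exI[of _ "f x"]) simp
  qed simp
  have l: "computable (\<lambda>x. LEAST q. g x = 0 \<or> f x < g x * Suc q)"
    by (rule c_least[OF d tot])
  have "computable (\<lambda>x. if g x = 0 then 0 else (LEAST q. g x = 0 \<or> f x < g x * Suc q))"
    by (intro c_if dec_eq l a c_const)
  moreover have "(if g x = 0 then 0 else (LEAST q. g x = 0 \<or> f x < g x * Suc q)) = f x div g x" for x
    using div_least[of "g x" "f x"] by (cases "g x = 0") simp_all
  ultimately show ?thesis by simp
qed

lemma c_mod: "computable f \<Longrightarrow> computable g \<Longrightarrow> computable (\<lambda>x. f x mod g x)"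
proof -
  assume a: "computable f" "computable g"
  have "computable (\<lambda>x. f x - g x * (f x div g x))" by (intro c_sub c_mult c_div a)
  then show ?thesis by (simp add: minus_mult_div_eq_mod)
qed

section \<open>List codes\<close>

definition hdc :: "nat \<Rightarrow> nat" where "hdc L = cfst (L - 1)"
definition tlc :: "nat \<Rightarrow> nat" where "tlc L = csnd (L - 1)"
definition consc :: "nat \<Rightarrow> nat \<Rightarrow> nat" where "consc a L = Suc (cpair a L)"
definition nthc :: "nat \<Rightarrow> nat \<Rightarrow> nat" where "nthc L i = hdc ((tlc ^^ i) L)"
definition lenc :: "nat \<Rightarrow> nat" where "lenc L = (LEAST i. (tlc ^^ i) L = 0)"

lemma cfst_pe[simp]: "cfst (prod_encode (a,b)) = a" by (simp add: cfst_def)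
lemma csnd_pe[simp]: "csnd (prod_encode (a,b)) = b" by (simp add: csnd_def)
lemma hdc_Suc[simp]: "hdc (Suc p) = cfst p" by (simp add: hdc_def)
lemma tlc_Suc[simp]: "tlc (Suc p) = csnd p" by (simp add: tlc_def)

lemma consc_enc[simp]: "consc x (list_encode xs) = list_encode (x # xs)"
  by (simp add: consc_def cpair_def)
lemma hdc_enc[simp]: "hdc (list_encode (x # xs)) = x"
  by (simp add: hdc_def cfst_def)
lemma tlc_enc[simp]: "tlc (list_encode (x # xs)) = list_encode xs"
  by (simp add: tlc_def csnd_def)
lemma csnd0: "csnd 0 = 0"
proof -
  have "prod_encode (0,0) = 0" by (simp add: prod_encode_def)
  then have "prod_decode 0 = (0,0)" by (metis prod_encode_inverse)
  then show ?thesis by (simp add: csnd_def)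
qed
lemma tlc0: "tlc 0 = 0" by (simp add: tlc_def csnd0)

lemma enc_eq0: "list_encode xs = 0 \<longleftrightarrow> xs = []"
  using list_encode_eq[of xs "[]"] by simp

lemma tlc_iter: "(tlc ^^ i) (list_encode xs) = list_encode (drop i xs)"
proof (induction i)
  case 0 then show ?case by simp
next
  case (Suc i)
  show ?case
  proof (cases "drop i xs")
    case Nil
    then have "drop (Suc i) xs = []" by (metis drop_Suc tl_Nil tl_drop)
    then show ?thesis using Suc Nil by (simp add: tlc0)
  next
    case (Cons y ys)
    then have "drop (Suc i) xs = ys" by (metis drop_Suc list.sel(3) tl_drop)
    then show ?thesis using Suc Cons by simp
  qed
qed

lemma nthc_enc: "i < length xs \<Longrightarrow> nthc (list_encode xs) i = xs ! i"
  by (simp add: nthc_def tlc_iter Cons_nth_drop_Suc[symmetric])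

lemma lenc_enc: "lenc (list_encode xs) = length xs"
  unfolding lenc_def tlc_iter
proof (rule Least_equality)
  show "list_encode (drop (length xs) xs) = 0" by simp
  fix y assume "list_encode (drop y xs) = 0"
  then show "length xs \<le> y" by (simp add: enc_eq0)
qed

lemma lenc_dec: "lenc L = length (list_decode L)"
  using lenc_enc[of "list_decode L"] by simp

lemma nthc_dec: "i < lenc L \<Longrightarrow> nthc L i = list_decode L ! i"
  using nthc_enc[of i "list_decode L"] by (simp add: lenc_dec)

lemma ex_set: "(\<exists>J\<in>set (list_decode L). P J) = (\<exists>j<lenc L. P (nthc L j))"
proof -
  have "(\<exists>j<lenc L. P (nthc L j)) = (\<exists>j<lenc L. P (list_decode L ! j))" by (auto simp: nthc_dec)
  also have "\<dots> = (\<exists>J\<in>set (list_decode L). P J)" unfolding lenc_dec by (metis in_set_conv_nth)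
  finally show ?thesis by simp
qed

lemma all_set: "(\<forall>J\<in>set (list_decode L). P J) = (\<forall>j<lenc L. P (nthc L j))"
  using ex_set[of L "\<lambda>J. \<not> P J"] by blast

lemma code_ext: "lenc U = lenc U' \<Longrightarrow> (\<forall>i<lenc U. nthc U i = nthc U' i) \<Longrightarrow> U = U'"
proof -
  assume a: "lenc U = lenc U'" "\<forall>i<lenc U. nthc U i = nthc U' i"
  have "list_decode U = list_decode U'"
    by (rule nth_equalityI) (use a in \<open>auto simp: lenc_dec[symmetric] nthc_dec[symmetric]\<close>)
  then show ?thesis by (metis list_decode_inverse)
qed

lemma c_hdc: "computable f \<Longrightarrow> computable (\<lambda>x. hdc (f x))"
  unfolding hdc_def by (intro c_basic)
lemma c_tlc: "computable f \<Longrightarrow> computable (\<lambda>x. tlc (f x))"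
  unfolding tlc_def by (intro c_basic)
lemma c_tlc_eta: "computable tlc" using c_tlc[OF c_id] by simp
lemma c_consc: "computable f \<Longrightarrow> computable g \<Longrightarrow> computable (\<lambda>x. consc (f x) (g x))"
  unfolding consc_def by (intro c_basic)
lemma c_nthc: "computable f \<Longrightarrow> computable g \<Longrightarrow> computable (\<lambda>x. nthc (f x) (g x))"
  unfolding nthc_def by (intro c_hdc c_funpow c_tlc_eta)
lemma c_lenc: "computable f \<Longrightarrow> computable (\<lambda>x. lenc (f x))"
proof -
  assume f: "computable f"
  have "computable (\<lambda>x. LEAST i. (tlc ^^ i) x = 0)"
  proof (rule c_least)
    show "dec (\<lambda>p. (tlc ^^ cfst p) (csnd p) = 0)" by (intro dec_eq c_funpow c_tlc_eta c_basic)
    fix x show "\<exists>i. (tlc ^^ i) x = 0"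
      using tlc_iter[of "length (list_decode x)" "list_decode x"] by (intro exI) simp
  qed
  from c_comp[OF this f] show ?thesis by (simp add: lenc_def)
qed

lemmas c_all = c_basic c_mult c_pow c_div c_mod c_if c_hdc c_tlc c_tlc_eta c_consc c_nthc c_lenc
  dec_eq dec_less dec_le dec_not dec_conj dec_disj dec_imp dec_iff dec_const
  dec_ex_less dec_all_less dec_ex_le dec_all_le

section \<open>Programs\<close>

inductive ev :: "nat \<Rightarrow> nat \<Rightarrow> nat \<Rightarrow> bool" where
  evZ: "cfst e = 0 \<Longrightarrow> ev e X 0"
| evS: "cfst e = 1 \<Longrightarrow> ev e X (Suc (hdc X))"
| evP: "cfst e = 2 \<Longrightarrow> ev e X (nthc X (csnd e))"
| evC: "cfst e = 3 \<Longrightarrow> lenc U = lenc (csnd (csnd e)) \<Longrightarrow>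
    (\<forall>i<lenc (csnd (csnd e)). ev (nthc (csnd (csnd e)) i) X (nthc U i)) \<Longrightarrow>
    ev (cfst (csnd e)) U v \<Longrightarrow> ev e X v"
| evR0: "cfst e = 4 \<Longrightarrow> hdc X = 0 \<Longrightarrow> ev (cfst (csnd e)) (tlc X) v \<Longrightarrow> ev e X v"
| evRS: "cfst e = 4 \<Longrightarrow> hdc X = Suc k \<Longrightarrow> ev e (consc k (tlc X)) r \<Longrightarrow>
    ev (csnd (csnd e)) (consc k (consc r (tlc X))) v \<Longrightarrow> ev e X v"
| evM: "cfst e = 5 \<Longrightarrow> ev (csnd e) (consc y X) 0 \<Longrightarrow>
    (\<forall>z<y. \<exists>u. u \<noteq> 0 \<and> ev (csnd e) (consc z X) u) \<Longrightarrow> ev e X y"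

lemma ev_det: "ev e X v \<Longrightarrow> ev e X v' \<Longrightarrow> v = v'"
proof (induction arbitrary: v' rule: ev.induct)
  case (evZ e X) from evZ.prems show ?case by (cases rule: ev.cases) (use evZ.hyps in simp_all)
next
  case (evS e X) from evS.prems show ?case by (cases rule: ev.cases) (use evS.hyps in simp_all)
next
  case (evP e X) from evP.prems show ?case by (cases rule: ev.cases) (use evP.hyps in simp_all)
next
  case (evC e U X v)
  from evC.prems show ?case
  proof (cases rule: ev.cases)
    case (evC U')
    have "U = U'"
    proof (rule code_ext)
      show "lenc U = lenc U'" using evC evC.hyps(2) by simp
      show "\<forall>i<lenc U. nthc U i = nthc U' i" using evC evC.IH(1) evC.hyps(2) by simp
    qed
    then show ?thesis using evC evC.IH(2) by simp
  qed (use evC.hyps in simp_all)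
next
  case (evR0 e X v)
  from evR0.prems show ?case
  proof (cases rule: ev.cases)
    case evR0
    then show ?thesis using evR0.IH by simp
  qed (use evR0.hyps in simp_all)
next
  case (evRS e X k r v)
  from evRS.prems show ?case
  proof (cases rule: ev.cases)
    case (evRS k' r')
    then have kk: "k' = k" using evRS.hyps(2) by simp
    then have "r' = r" using evRS evRS.IH(1) by simp
    then show ?thesis using evRS evRS.IH(2) kk by simp
  qed (use evRS.hyps in simp_all)
next
  case (evM e y X)
  from evM.prems show ?case
  proof (cases rule: ev.cases)
    case evM2: evM
    show ?thesis
    proof (rule ccontr)
      assume ne: "y \<noteq> v'"
      show False
      proof (cases "y < v'")
        case True
        then obtain u where "u \<noteq> 0" "ev (csnd e) (consc y X) u" using evM2 by blast
        then show False using evM.IH(1) by blast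
      next
        case False
        then have "v' < y" using ne by simp
        then obtain u where "u \<noteq> 0" "\<forall>w. ev (csnd e) (consc v' X) w \<longrightarrow> u = w"
          using evM.IH(2) by blast
        then show False using evM2 by simp
      qed
    qed
  qed (use evM.hyps in simp_all)
qed

lemma hdc_enc': "xs \<noteq> [] \<Longrightarrow> hdc (list_encode xs) = hd xs"
  by (cases xs) simp_all
lemma tlc_enc': "tlc (list_encode xs) = list_encode (tl xs)"
  by (cases xs) (simp_all add: tlc0)

lemma compile: "total_rec n f \<Longrightarrow> \<exists>e. \<forall>xs. length xs = n \<longrightarrow> ev e (list_encode xs) (f xs)"
proof (induction rule: total_rec.induct)
  case (zero n) show ?case by (intro exI[of _ "cpair 0 0"] allI impI) (rule evZ, simp)
next
  case succ
  show ?case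
  proof (intro exI[of _ "cpair 1 0"] allI impI)
    fix xs :: "nat list" assume "length xs = 1"
    then have ne: "xs \<noteq> []" by auto
    have "ev (cpair 1 0) (list_encode xs) (Suc (hdc (list_encode xs)))" by (rule evS) simp
    then show "ev (cpair 1 0) (list_encode xs) (Suc (hd xs))" using hdc_enc'[OF ne] by simp
  qed
next
  case (proj i n)
  show ?case
  proof (intro exI[of _ "cpair 2 i"] allI impI)
    fix xs :: "nat list" assume "length xs = n"
    have "ev (cpair 2 i) (list_encode xs) (nthc (list_encode xs) (csnd (cpair 2 i)))" by (rule evP) simp
    then show "ev (cpair 2 i) (list_encode xs) (xs ! i)" using nthc_enc[of i xs] proj \<open>length xs = n\<close> by simp
  qed
next
  case (comp m f gs n)
  obtain ef where ef: "\<forall>ys. length ys = m \<longrightarrow> ev ef (list_encode ys) (f ys)" using comp by blast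
  have "\<forall>i. \<exists>c. i < m \<longrightarrow> (\<forall>xs. length xs = n \<longrightarrow> ev c (list_encode xs) ((gs ! i) xs))"
    using comp by blast
  then obtain c where c: "\<And>i xs. i < m \<Longrightarrow> length xs = n \<Longrightarrow> ev (c i) (list_encode xs) ((gs ! i) xs)"
    by metis
  define cs where "cs = list_encode (map c [0..<m])"
  show ?case
  proof (intro exI[of _ "cpair 3 (cpair ef cs)"] allI impI)
    fix xs :: "nat list" assume xs: "length xs = n"
    define U where "U = list_encode (map (\<lambda>g. g xs) gs)"
    have lU: "lenc U = m" using comp by (simp add: U_def lenc_enc)
    have lcs: "lenc cs = m" by (simp add: cs_def lenc_enc)
    show "ev (cpair 3 (cpair ef cs)) (list_encode xs) (f (map (\<lambda>g. g xs) gs))"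
    proof (rule evC[where U=U])
      show "lenc U = lenc (csnd (csnd (cpair 3 (cpair ef cs))))" using lU lcs by simp
      show "\<forall>i<lenc (csnd (csnd (cpair 3 (cpair ef cs)))). ev (nthc (csnd (csnd (cpair 3 (cpair ef cs)))) i) (list_encode xs) (nthc U i)"
        using lcs c xs comp by (auto simp: cs_def U_def nthc_enc)
      show "ev (cfst (csnd (cpair 3 (cpair ef cs)))) U (f (map (\<lambda>g. g xs) gs))"
        using ef comp by (simp add: U_def)
    qed simp
  qed
next
  case (prim n g h)
  obtain eg where eg: "\<forall>ys. length ys = n \<longrightarrow> ev eg (list_encode ys) (g ys)" using prim by blast
  obtain eh where eh: "\<forall>ys. length ys = Suc (Suc n) \<longrightarrow> ev eh (list_encode ys) (h ys)" using prim by blast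
  define e where "e = cpair 4 (cpair eg eh)"
  have main: "length ys = n \<Longrightarrow> ev e (list_encode (x # ys)) (rec_nat (g ys) (\<lambda>k r. h (k # r # ys)) x)" for x ys
  proof (induction x)
    case 0
    show ?case by (rule evR0) (use 0 eg in \<open>simp_all add: e_def\<close>)
  next
    case (Suc k)
    show ?case
    proof (rule evRS[where k=k and r="rec_nat (g ys) (\<lambda>k r. h (k # r # ys)) k"])
      show "ev e (consc k (tlc (list_encode (Suc k # ys)))) (rec_nat (g ys) (\<lambda>k r. h (k # r # ys)) k)"
        using Suc by simp
      show "ev (csnd (csnd e)) (consc k (consc (rec_nat (g ys) (\<lambda>k r. h (k # r # ys)) k) (tlc (list_encode (Suc k # ys))))) (rec_nat (g ys) (\<lambda>k r. h (k # r # ys)) (Suc k))"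
        using eh Suc.prems by (simp add: e_def del: list_encode.simps(2))
    qed (simp_all add: e_def)
  qed
  show ?case
  proof (intro exI[of _ e] allI impI)
    fix xs :: "nat list" assume "length xs = Suc n"
    then obtain x ys where xs: "xs = x # ys" "length ys = n" by (cases xs) auto
    show "ev e (list_encode xs) (rec_nat (g (tl xs)) (\<lambda>k r. h (k # r # tl xs)) (hd xs))"
      using main[OF xs(2)] xs(1) by simp
  qed
next
  case (mini n g)
  obtain eg where eg: "\<forall>ys. length ys = Suc n \<longrightarrow> ev eg (list_encode ys) (g ys)" using mini by blast
  show ?case
  proof (intro exI[of _ "cpair 5 eg"] allI impI)
    fix xs :: "nat list" assume xs: "length xs = n"
    obtain y0 where y0: "g (y0 # xs) = 0" using mini xs by blast
    show "ev (cpair 5 eg) (list_encode xs) (LEAST y. g (y # xs) = 0)"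
    proof (rule evM)
      show "ev (csnd (cpair 5 eg)) (consc (LEAST y. g (y # xs) = 0) (list_encode xs)) 0"
        using eg xs LeastI[of "\<lambda>y. g (y # xs) = 0", OF y0] by (metis consc_enc csnd_cpair length_Cons)
      show "\<forall>z<(LEAST y. g (y # xs) = 0). \<exists>u. u \<noteq> 0 \<and> ev (csnd (cpair 5 eg)) (consc z (list_encode xs)) u"
      proof (intro allI impI)
        fix z assume "z < (LEAST y. g (y # xs) = 0)"
        then have "g (z # xs) \<noteq> 0" by (rule not_less_Least)
        then show "\<exists>u. u \<noteq> 0 \<and> ev (csnd (cpair 5 eg)) (consc z (list_encode xs)) u"
          using eg[rule_format, of "z # xs"] xs by (intro exI[of _ "g (z # xs)"]) (simp del: list_encode.simps(2))
      qed
    qed simp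
  qed
next
  case (ext n f f')
  then show ?case by metis
qed

section \<open>Certificates\<close>

definition jr :: "nat \<Rightarrow> nat" where "jr J = cfst J"
definition je :: "nat \<Rightarrow> nat" where "je J = cfst (csnd J)"
definition jx :: "nat \<Rightarrow> nat" where "jx J = cfst (csnd (csnd J))"
definition jv :: "nat \<Rightarrow> nat" where "jv J = cfst (csnd (csnd (csnd J)))"
definition jw :: "nat \<Rightarrow> nat" where "jw J = csnd (csnd (csnd (csnd J)))"
definition mkj :: "nat \<Rightarrow> nat \<Rightarrow> nat \<Rightarrow> nat \<Rightarrow> nat \<Rightarrow> nat" where
  "mkj r e X v w = cpair r (cpair e (cpair X (cpair v w)))"

lemma mkj_sel[simp]: "jr (mkj r e X v w) = r" "je (mkj r e X v w) = e" "jx (mkj r e X v w) = X"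
  "jv (mkj r e X v w) = v" "jw (mkj r e X v w) = w"
  by (simp_all add: mkj_def jr_def je_def jx_def jv_def jw_def)

definition fndS :: "nat set \<Rightarrow> nat \<Rightarrow> nat \<Rightarrow> nat \<Rightarrow> nat \<Rightarrow> bool" where
  "fndS S r e X v \<longleftrightarrow> (\<exists>J\<in>S. jr J < r \<and> je J = e \<and> jx J = X \<and> jv J = v)"
definition fnzS :: "nat set \<Rightarrow> nat \<Rightarrow> nat \<Rightarrow> nat \<Rightarrow> bool" where
  "fnzS S r e X \<longleftrightarrow> (\<exists>J\<in>S. jr J < r \<and> je J = e \<and> jx J = X \<and> jv J \<noteq> 0)"

definition justS :: "nat set \<Rightarrow> nat \<Rightarrow> bool" where
  "justS S J \<longleftrightarrow>
    (cfst (je J) = 0 \<and> jv J = 0) \<or>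
    (cfst (je J) = 1 \<and> jv J = Suc (hdc (jx J))) \<or>
    (cfst (je J) = 2 \<and> jv J = nthc (jx J) (csnd (je J))) \<or>
    (cfst (je J) = 3 \<and> lenc (jw J) = lenc (csnd (csnd (je J))) \<and>
      (\<forall>i<lenc (csnd (csnd (je J))). fndS S (jr J) (nthc (csnd (csnd (je J))) i) (jx J) (nthc (jw J) i)) \<and>
      fndS S (jr J) (cfst (csnd (je J))) (jw J) (jv J)) \<or>
    (cfst (je J) = 4 \<and> hdc (jx J) = 0 \<and> fndS S (jr J) (cfst (csnd (je J))) (tlc (jx J)) (jv J)) \<or>
    (cfst (je J) = 4 \<and> hdc (jx J) \<noteq> 0 \<and>
      fndS S (jr J) (je J) (consc (hdc (jx J) - 1) (tlc (jx J))) (jw J) \<and>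
      fndS S (jr J) (csnd (csnd (je J))) (consc (hdc (jx J) - 1) (consc (jw J) (tlc (jx J)))) (jv J)) \<or>
    (cfst (je J) = 5 \<and> fndS S (jr J) (csnd (je J)) (consc (jv J) (jx J)) 0 \<and>
      (\<forall>z<jv J. fnzS S (jr J) (csnd (je J)) (consc z (jx J))))"

lemma sound:
  assumes cl: "\<forall>J\<in>S. justS S J"
  shows "J \<in> S \<Longrightarrow> ev (je J) (jx J) (jv J)"
proof (induction "jr J" arbitrary: J rule: less_induct)
  case less
  have IH: "\<And>J'. J' \<in> S \<Longrightarrow> jr J' < jr J \<Longrightarrow> ev (je J') (jx J') (jv J')" using less by blast
  have fnd: "ev e X v" if "fndS S (jr J) e X v" for e X v
    using that IH unfolding fndS_def by blast
  have fnz: "\<exists>u. u \<noteq> 0 \<and> ev e X u" if "fnzS S (jr J) e X" for e X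
    using that IH unfolding fndS_def fnzS_def by blast
  from cl less.prems have "justS S J" by blast
  then show ?case unfolding justS_def
  proof (elim disjE conjE)
    assume "cfst (je J) = 0" "jv J = 0" then show ?thesis by (simp add: evZ)
  next
    assume "cfst (je J) = 1" "jv J = Suc (hdc (jx J))" then show ?thesis by (simp add: evS)
  next
    assume "cfst (je J) = 2" "jv J = nthc (jx J) (csnd (je J))" then show ?thesis by (simp add: evP)
  next
    assume a: "cfst (je J) = 3" "lenc (jw J) = lenc (csnd (csnd (je J)))"
      "\<forall>i<lenc (csnd (csnd (je J))). fndS S (jr J) (nthc (csnd (csnd (je J))) i) (jx J) (nthc (jw J) i)"
      "fndS S (jr J) (cfst (csnd (je J))) (jw J) (jv J)"
    show ?thesis by (rule evC[where U="jw J"]) (use a fnd in auto)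
  next
    assume a: "cfst (je J) = 4" "hdc (jx J) = 0" "fndS S (jr J) (cfst (csnd (je J))) (tlc (jx J)) (jv J)"
    show ?thesis by (rule evR0) (use a fnd in auto)
  next
    assume a: "cfst (je J) = 4" "hdc (jx J) \<noteq> 0"
      "fndS S (jr J) (je J) (consc (hdc (jx J) - 1) (tlc (jx J))) (jw J)"
      "fndS S (jr J) (csnd (csnd (je J))) (consc (hdc (jx J) - 1) (consc (jw J) (tlc (jx J)))) (jv J)"
    show ?thesis by (rule evRS[where k="hdc (jx J) - 1" and r="jw J"]) (use a fnd in auto)
  next
    assume a: "cfst (je J) = 5" "fndS S (jr J) (csnd (je J)) (consc (jv J) (jx J)) 0"
      "\<forall>z<jv J. fnzS S (jr J) (csnd (je J)) (consc z (jx J))"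
    show ?thesis by (rule evM) (use a fnd fnz in auto)
  qed
qed

lemma fndI: "mkj r' e X v w \<in> S \<Longrightarrow> r' < r \<Longrightarrow> fndS S r e X v"
  unfolding fndS_def by (intro bexI[of _ "mkj r' e X v w"]) auto
lemma fnzI: "mkj r' e X v w \<in> S \<Longrightarrow> r' < r \<Longrightarrow> v \<noteq> 0 \<Longrightarrow> fnzS S r e X"
  unfolding fnzS_def by (intro bexI[of _ "mkj r' e X v w"]) auto
lemma fndS_mono: "fndS S r e X v \<Longrightarrow> S \<subseteq> S' \<Longrightarrow> fndS S' r e X v"
  unfolding fndS_def by blast
lemma fnzS_mono: "fnzS S r e X \<Longrightarrow> S \<subseteq> S' \<Longrightarrow> fnzS S' r e X"
  unfolding fnzS_def by blast
lemma justS_mono: "justS S J \<Longrightarrow> S \<subseteq> S' \<Longrightarrow> justS S' J"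
proof -
  assume j: "justS S J" and s: "S \<subseteq> S'"
  have f: "\<And>r e X v. fndS S r e X v \<Longrightarrow> fndS S' r e X v" using fndS_mono s by blast
  have z: "\<And>r e X. fnzS S r e X \<Longrightarrow> fnzS S' r e X" using fnzS_mono s by blast
  show ?thesis using j unfolding justS_def
    apply (elim disjE)
    using f z by blast+
qed

lemma closed_union:
  assumes "\<forall>J\<in>S1. justS S1 J" "S1 \<subseteq> S" shows "\<forall>J\<in>S1. justS S J"
  using assms justS_mono by blast

lemma justC: "cfst e = 3 \<Longrightarrow> lenc w = lenc (csnd (csnd e)) \<Longrightarrow>
  (\<forall>i<lenc (csnd (csnd e)). fndS S r (nthc (csnd (csnd e)) i) X (nthc w i)) \<Longrightarrow>
  fndS S r (cfst (csnd e)) w v \<Longrightarrow> justS S (mkj r e X v w)"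
  unfolding justS_def by simp
lemma justR0: "cfst e = 4 \<Longrightarrow> hdc X = 0 \<Longrightarrow> fndS S r (cfst (csnd e)) (tlc X) v \<Longrightarrow> justS S (mkj r e X v w)"
  unfolding justS_def by simp
lemma justRS: "cfst e = 4 \<Longrightarrow> hdc X = Suc k \<Longrightarrow> fndS S r e (consc k (tlc X)) w \<Longrightarrow>
  fndS S r (csnd (csnd e)) (consc k (consc w (tlc X))) v \<Longrightarrow> justS S (mkj r e X v w)"
  unfolding justS_def by simp
lemma justM: "cfst e = 5 \<Longrightarrow> fndS S r (csnd e) (consc v X) 0 \<Longrightarrow>
  (\<forall>z<v. fnzS S r (csnd e) (consc z X)) \<Longrightarrow> justS S (mkj r e X v w)"
  unfolding justS_def by simp

lemma complete: "ev e X v \<Longrightarrow> \<exists>S r w. finite S \<and> (\<forall>J\<in>S. justS S J) \<and> mkj r e X v w \<in> S"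
proof (induction rule: ev.induct)
  case (evZ e X)
  show ?case by (rule exI[of _ "{mkj 0 e X 0 0}"], rule exI[of _ 0], rule exI[of _ 0]) (simp add: justS_def evZ)
next
  case (evS e X)
  show ?case by (rule exI[of _ "{mkj 0 e X (Suc (hdc X)) 0}"], rule exI[of _ 0], rule exI[of _ 0]) (simp add: justS_def evS)
next
  case (evP e X)
  show ?case by (rule exI[of _ "{mkj 0 e X (nthc X (csnd e)) 0}"], rule exI[of _ 0], rule exI[of _ 0]) (simp add: justS_def evP)
next
  case (evC e U X v)
  define n where "n = lenc (csnd (csnd e))"
  obtain S0 r0 w0 where S0: "finite S0" "\<forall>J\<in>S0. justS S0 J" "mkj r0 (cfst (csnd e)) U v w0 \<in> S0"
    using evC.IH(2) by blast
  have "\<forall>i. \<exists>t. i < n \<longrightarrow> finite (fst t) \<and> (\<forall>J\<in>fst t. justS (fst t) J) \<and>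
      mkj (fst (snd t)) (nthc (csnd (csnd e)) i) X (nthc U i) (snd (snd t)) \<in> fst t"
    using evC.IH(1) unfolding n_def by fastforce
  from choice[OF this] obtain t where t0: "\<forall>i. i < n \<longrightarrow> finite (fst (t i)) \<and> (\<forall>J\<in>fst (t i). justS (fst (t i)) J) \<and>
      mkj (fst (snd (t i))) (nthc (csnd (csnd e)) i) X (nthc U i) (snd (snd (t i))) \<in> fst (t i)"
    by blast
  then have t: "\<And>i. i < n \<Longrightarrow> finite (fst (t i)) \<and> (\<forall>J\<in>fst (t i). justS (fst (t i)) J) \<and>
      mkj (fst (snd (t i))) (nthc (csnd (csnd e)) i) X (nthc U i) (snd (snd (t i))) \<in> fst (t i)"
    by blast
  define R where "R = Suc (r0 + (\<Sum>i<n. fst (snd (t i))))"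
  define S where "S = insert (mkj R e X v U) (S0 \<union> (\<Union>i<n. fst (t i)))"
  have sub0: "S0 \<subseteq> S" unfolding S_def by blast
  have subi: "i < n \<Longrightarrow> fst (t i) \<subseteq> S" for i unfolding S_def by blast
  have rk: "i < n \<Longrightarrow> fst (snd (t i)) < R" for i
    unfolding R_def using member_le_sum[of i "{..<n}" "\<lambda>i. fst (snd (t i))"] by simp
  have "justS S (mkj R e X v U)"
  proof (rule justC[OF evC.hyps(1,2)], intro allI impI)
    fix i assume i: "i < lenc (csnd (csnd e))"
    show "fndS S R (nthc (csnd (csnd e)) i) X (nthc U i)"
      using t[of i] i subi[of i] rk[of i] unfolding n_def by (intro fndI) auto
  next
    show "fndS S R (cfst (csnd e)) U v" using S0 sub0 unfolding R_def by (intro fndI) auto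
  qed
  moreover have "\<forall>J\<in>S0. justS S J" using closed_union[OF S0(2) sub0] .
  moreover have "\<forall>J\<in>fst (t i). justS S J" if "i < n" for i using closed_union[OF _ subi] t that by blast
  ultimately have "\<forall>J\<in>S. justS S J" unfolding S_def by blast
  moreover have "finite S" unfolding S_def using S0 t by auto
  moreover have "mkj R e X v U \<in> S" by (simp add: S_def)
  ultimately show ?case by blast
next
  case (evR0 e X v)
  obtain S0 r0 w0 where S0: "finite S0" "\<forall>J\<in>S0. justS S0 J" "mkj r0 (cfst (csnd e)) (tlc X) v w0 \<in> S0"
    using evR0.IH by blast
  define S where "S = insert (mkj (Suc r0) e X v 0) S0"
  have sub0: "S0 \<subseteq> S" unfolding S_def by blast
  have "justS S (mkj (Suc r0) e X v 0)"
    by (rule justR0[OF evR0.hyps(1,2)], rule fndI[of r0 _ _ v w0]) (use S0 sub0 in auto)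
  moreover have "\<forall>J\<in>S0. justS S J" using closed_union[OF S0(2) sub0] .
  ultimately have "\<forall>J\<in>S. justS S J" unfolding S_def by blast
  moreover have "finite S" using S0 by (simp add: S_def)
  moreover have "mkj (Suc r0) e X v 0 \<in> S" by (simp add: S_def)
  ultimately show ?case by blast
next
  case (evRS e X k r v)
  obtain S1 r1 w1 where S1: "finite S1" "\<forall>J\<in>S1. justS S1 J" "mkj r1 e (consc k (tlc X)) r w1 \<in> S1"
    using evRS.IH(1) by blast
  obtain S2 r2 w2 where S2: "finite S2" "\<forall>J\<in>S2. justS S2 J"
      "mkj r2 (csnd (csnd e)) (consc k (consc r (tlc X))) v w2 \<in> S2"
    using evRS.IH(2) by blast
  define S where "S = insert (mkj (Suc (r1 + r2)) e X v r) (S1 \<union> S2)"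
  have sub: "S1 \<subseteq> S" "S2 \<subseteq> S" unfolding S_def by blast+
  have "justS S (mkj (Suc (r1 + r2)) e X v r)"
  proof (rule justRS[OF evRS.hyps(1,2)])
    show "fndS S (Suc (r1 + r2)) e (consc k (tlc X)) r"
      by (rule fndI[of r1 e "consc k (tlc X)" r w1]) (use S1 sub in auto)
    show "fndS S (Suc (r1 + r2)) (csnd (csnd e)) (consc k (consc r (tlc X))) v"
      by (rule fndI[of r2 _ _ v w2]) (use S2 sub in auto)
  qed
  moreover have "\<forall>J\<in>S1. justS S J" using closed_union[OF S1(2) sub(1)] .
  moreover have "\<forall>J\<in>S2. justS S J" using closed_union[OF S2(2) sub(2)] .
  ultimately have "\<forall>J\<in>S. justS S J" unfolding S_def by blast
  moreover have "finite S" using S1 S2 by (simp add: S_def)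
  moreover have "mkj (Suc (r1 + r2)) e X v r \<in> S" by (simp add: S_def)
  ultimately show ?case by blast
next
  case (evM e y X)
  obtain S0 r0 w0 where S0: "finite S0" "\<forall>J\<in>S0. justS S0 J" "mkj r0 (csnd e) (consc y X) 0 w0 \<in> S0"
    using evM.IH(1) by blast
  have "\<forall>z. \<exists>t. z < y \<longrightarrow> fst t \<noteq> 0 \<and> finite (fst (snd t)) \<and> (\<forall>J\<in>fst (snd t). justS (fst (snd t)) J) \<and>
      mkj (fst (snd (snd t))) (csnd e) (consc z X) (fst t) (snd (snd (snd t))) \<in> fst (snd t)"
  proof (intro allI)
    fix z
    show "\<exists>t. z < y \<longrightarrow> fst t \<noteq> 0 \<and> finite (fst (snd t)) \<and> (\<forall>J\<in>fst (snd t). justS (fst (snd t)) J) \<and>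
      mkj (fst (snd (snd t))) (csnd e) (consc z X) (fst t) (snd (snd (snd t))) \<in> fst (snd t)"
    proof (cases "z < y")
      case True
      from evM.IH(2)[rule_format, OF True] obtain u S r w where "u \<noteq> 0" "finite S" "\<forall>J\<in>S. justS S J" "mkj r (csnd e) (consc z X) u w \<in> S"
        by (elim exE conjE) auto
      then show ?thesis by (intro exI[of _ "(u, S, r, w)"]) simp
    qed simp
  qed
  from choice[OF this] obtain t where t0: "\<forall>z. z < y \<longrightarrow> fst (t z) \<noteq> 0 \<and> finite (fst (snd (t z))) \<and> (\<forall>J\<in>fst (snd (t z)). justS (fst (snd (t z))) J) \<and>
      mkj (fst (snd (snd (t z)))) (csnd e) (consc z X) (fst (t z)) (snd (snd (snd (t z)))) \<in> fst (snd (t z))"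
    by blast
  then have t: "\<And>z. z < y \<Longrightarrow> fst (t z) \<noteq> 0 \<and> finite (fst (snd (t z))) \<and> (\<forall>J\<in>fst (snd (t z)). justS (fst (snd (t z))) J) \<and>
      mkj (fst (snd (snd (t z)))) (csnd e) (consc z X) (fst (t z)) (snd (snd (snd (t z)))) \<in> fst (snd (t z))"
    by blast
  define R where "R = Suc (r0 + (\<Sum>z<y. fst (snd (snd (t z)))))"
  define S where "S = insert (mkj R e X y 0) (S0 \<union> (\<Union>z<y. fst (snd (t z))))"
  have sub0: "S0 \<subseteq> S" unfolding S_def by blast
  have subi: "z < y \<Longrightarrow> fst (snd (t z)) \<subseteq> S" for z unfolding S_def by blast
  have rk: "z < y \<Longrightarrow> fst (snd (snd (t z))) < R" for z
    unfolding R_def using member_le_sum[of z "{..<y}" "\<lambda>z. fst (snd (snd (t z)))"] by simp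
  have "justS S (mkj R e X y 0)"
  proof (rule justM[OF evM.hyps(1)])
    show "fndS S R (csnd e) (consc y X) 0" using S0 sub0 unfolding R_def by (intro fndI) auto
    show "\<forall>z<y. fnzS S R (csnd e) (consc z X)"
    proof (intro allI impI)
    fix z assume z: "z < y"
    show "fnzS S R (csnd e) (consc z X)"
      using t[OF z] subi[OF z] rk[OF z] by (intro fnzI[of "fst (snd (snd (t z)))" _ _ "fst (t z)" "snd (snd (snd (t z)))"]) auto
    qed
  qed
  moreover have "\<forall>J\<in>S0. justS S J" using closed_union[OF S0(2) sub0] .
  moreover have "\<forall>J\<in>fst (snd (t z)). justS S J" if "z < y" for z using closed_union[OF _ subi] t that by blast
  ultimately have "\<forall>J\<in>S. justS S J" unfolding S_def by blast
  moreover have "finite S" unfolding S_def using S0 t by auto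
  moreover have "mkj R e X y 0 \<in> S" by (simp add: S_def)
  ultimately show ?case by blast
qed

definition cert :: "nat \<Rightarrow> nat \<Rightarrow> nat \<Rightarrow> nat \<Rightarrow> bool" where
  "cert e X v L \<longleftrightarrow> (\<forall>J\<in>set (list_decode L). justS (set (list_decode L)) J) \<and>
     (\<exists>J\<in>set (list_decode L). je J = e \<and> jx J = X \<and> jv J = v)"

lemma cert_ev: "cert e X v L \<Longrightarrow> ev e X v"
proof -
  assume "cert e X v L"
  then have cl: "\<forall>J\<in>set (list_decode L). justS (set (list_decode L)) J"
    and "\<exists>J\<in>set (list_decode L). je J = e \<and> jx J = X \<and> jv J = v" unfolding cert_def by auto
  then obtain J where J: "J \<in> set (list_decode L)" "je J = e" "jx J = X" "jv J = v" by blast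
  from sound[OF cl J(1)] J(2-4) show ?thesis by simp
qed

lemma ev_cert: "ev e X v \<Longrightarrow> \<exists>L. cert e X v L"
proof -
  assume "ev e X v"
  then have "\<exists>S r w. finite S \<and> (\<forall>J\<in>S. justS S J) \<and> mkj r e X v w \<in> S" by (rule complete)
  then obtain S r w where S: "finite S" "\<forall>J\<in>S. justS S J" "mkj r e X v w \<in> S" by (elim exE conjE)
  obtain xs where xs: "set xs = S" using finite_list[OF S(1)] by (elim exE)
  have d: "list_decode (list_encode xs) = xs" by simp
  have 1: "\<forall>J\<in>set (list_decode (list_encode xs)). justS (set (list_decode (list_encode xs))) J"
    unfolding d xs by (rule S(2))
  have 2: "\<exists>J\<in>set (list_decode (list_encode xs)). je J = e \<and> jx J = X \<and> jv J = v"
    unfolding d xs by (rule bexI[OF _ S(3)]) simp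
  have "cert e X v (list_encode xs)" unfolding cert_def using 1 2 by (rule conjI)
  then show ?thesis by blast
qed

lemma dec_cert:
  assumes a: "computable fe" "computable fX" "computable fv" "computable fL"
  shows "dec (\<lambda>x. cert (fe x) (fX x) (fv x) (fL x))"
  unfolding cert_def justS_def fndS_def fnzS_def jr_def je_def jx_def jv_def jw_def
  apply (simp only: ex_set all_set)
  apply (intro c_all c_comp[OF a(1)] c_comp[OF a(2)] c_comp[OF a(3)] c_comp[OF a(4)])
  done

definition run :: "nat \<Rightarrow> nat \<Rightarrow> nat" where
  "run e n = cfst (LEAST w. cert e (consc n 0) (cfst w) (csnd w))"

lemma run_ev: "\<exists>v. ev e (consc n 0) v \<Longrightarrow> ev e (consc n 0) (run e n)"
proof -
  assume "\<exists>v. ev e (consc n 0) v"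
  then obtain v where "ev e (consc n 0) v" by (elim exE)
  then obtain L where L: "cert e (consc n 0) v L" using ev_cert by blast
  have "\<exists>w. cert e (consc n 0) (cfst w) (csnd w)" using L by (intro exI[of _ "cpair v L"]) simp
  then have "cert e (consc n 0) (cfst (LEAST w. cert e (consc n 0) (cfst w) (csnd w))) (csnd (LEAST w. cert e (consc n 0) (cfst w) (csnd w)))"
    by (rule LeastI_ex)
  then show ?thesis unfolding run_def by (rule cert_ev)
qed

lemma c_run: "(\<And>n. \<exists>v. ev e (consc n 0) v) \<Longrightarrow> computable (run e)"
proof -
  assume tot: "\<And>n. \<exists>v. ev e (consc n 0) v"
  have "computable (\<lambda>n. LEAST w. cert e (consc n 0) (cfst w) (csnd w))"
  proof (rule c_least)
    show "dec (\<lambda>p. cert e (consc (csnd p) 0) (cfst (cfst p)) (csnd (cfst p)))"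
      by (intro dec_cert c_all)
    fix n
    obtain v where "ev e (consc n 0) v" using tot[of n] by (elim exE)
    then obtain L where L: "cert e (consc n 0) v L" using ev_cert by blast
    show "\<exists>w. cert e (consc n 0) (cfst w) (csnd w)" using L by (intro exI[of _ "cpair v L"]) simp
  qed
  then have "computable (\<lambda>n. cfst (LEAST w. cert e (consc n 0) (cfst w) (csnd w)))" by (rule c_cfst)
  then show ?thesis by (simp add: run_def[abs_def])
qed

section \<open>Prefix codes\<close>

lemma pc_rec: "prefix_code X (Suc m) = (if X 0 then 1 else 0) + 2 * prefix_code (\<lambda>i. X (Suc i)) m"
proof -
  define f where "f = (\<lambda>i. if X i then 2 ^ i else (0::nat))"
  have "(\<Sum>i<Suc m. f i) = f 0 + (\<Sum>i<m. f (Suc i))" by (rule sum.lessThan_Suc_shift)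
  moreover have "f (Suc i) = 2 * (if X (Suc i) then 2 ^ i else 0)" for i by (simp add: f_def)
  moreover have "f 0 = (if X 0 then 1 else 0)" by (simp add: f_def)
  ultimately have "(\<Sum>i<Suc m. f i) = (if X 0 then 1 else 0) + 2 * (\<Sum>i<m. if X (Suc i) then 2 ^ i else 0)"
    by (simp add: sum_distrib_left)
  then show ?thesis unfolding prefix_code_def f_def by simp
qed

lemma pc_bounds: "2 ^ m \<le> prefix_code X m \<and> prefix_code X m < 2 ^ Suc m"
proof (induction m arbitrary: X)
  case 0 then show ?case by (simp add: prefix_code_def)
next
  case (Suc m)
  from Suc[of "\<lambda>i. X (Suc i)"] show ?case by (simp add: pc_rec)
qed

lemma pc_bit: "i < m \<Longrightarrow> (prefix_code X m div 2 ^ i) mod 2 = (if X i then 1 else 0)"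
proof (induction i arbitrary: X m)
  case 0
  then obtain m' where m: "m = Suc m'" by (cases m) auto
  show ?case by (simp add: m pc_rec)
next
  case (Suc i)
  then obtain m' where m: "m = Suc m'" by (cases m) auto
  have "prefix_code X m div 2 ^ Suc i = (prefix_code X m div 2) div 2 ^ i"
    by (simp add: div_mult2_eq)
  also have "prefix_code X m div 2 = prefix_code (\<lambda>i. X (Suc i)) m'"
    by (simp add: m pc_rec)
  finally show ?case using Suc.IH[of m' "\<lambda>i. X (Suc i)"] Suc.prems m by simp
qed

definition plen :: "nat \<Rightarrow> nat" where "plen c = (LEAST k. c < 2 ^ Suc k)"

lemma plen_pc: "plen (prefix_code X m) = m"
  unfolding plen_def
proof (rule Least_equality)
  show "prefix_code X m < 2 ^ Suc m" using pc_bounds by blast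
  fix y assume y: "prefix_code X m < 2 ^ Suc y"
  show "m \<le> y"
  proof (rule ccontr)
    assume "\<not> m \<le> y"
    then have "(2::nat) ^ Suc y \<le> 2 ^ m" by (intro power_increasing) auto
    then show False using y pc_bounds[of m X] by simp
  qed
qed

definition rd :: "nat \<Rightarrow> nat \<Rightarrow> bool" where "rd c i \<longleftrightarrow> i < plen c \<and> (c div 2 ^ i) mod 2 = 1"

lemma rd_pc: "rd (prefix_code X m) = (\<lambda>i. i < m \<and> X i)"
  by (rule HOL.ext) (auto simp: rd_def plen_pc pc_bit split: if_splits)

lemma c_plen: "computable f \<Longrightarrow> computable (\<lambda>x. plen (f x))"
proof -
  assume f: "computable f"
  have "computable (\<lambda>c. LEAST k. c < (2::nat) ^ Suc k)"
  proof (rule c_least)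
    show "dec (\<lambda>p. csnd p < (2::nat) ^ Suc (cfst p))" by (intro c_all)
    fix c show "\<exists>k. c < (2::nat) ^ Suc k"
      using less_exp[of c] by (intro exI[of _ c]) (simp add: less_trans[of c "2^c" "2*2^c"])
  qed
  from c_comp[OF this f] show ?thesis by (simp add: plen_def)
qed

lemma dec_rd: "computable c \<Longrightarrow> computable i \<Longrightarrow> dec (\<lambda>x. rd (c x) (i x))"
  unfolding rd_def by (intro c_all c_plen)

definition Hrel :: "(nat \<Rightarrow> bool) \<Rightarrow> (nat \<Rightarrow> bool) \<Rightarrow> bool" where
  "Hrel X C \<longleftrightarrow> (\<exists>h. (\<forall>i. C (3*i+2) \<longleftrightarrow> i < h) \<and> (\<exists>a. C (3*a)) \<and> (\<exists>a. \<not> C (3*a)) \<and>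
     ((\<forall>i. X i \<longleftrightarrow> C (3*i)) \<or> (\<forall>i. X i \<longleftrightarrow> C (3*i+1))) \<and>
     (\<forall>j. \<exists>v. ev (cfst (cfst h)) (consc j 0) v \<and> (C (3*j+1) \<longleftrightarrow> C (3*v))) \<and>
     (\<forall>j. \<exists>v. ev (csnd (cfst h)) (consc j 0) v \<and> (C (3*j) \<longleftrightarrow> C (3*v+1))))"

definition Phi0 :: "nat \<Rightarrow> nat \<Rightarrow> (nat \<Rightarrow> bool) \<Rightarrow> (nat \<Rightarrow> bool) \<Rightarrow> bool" where
  "Phi0 n m Xr Cr \<longleftrightarrow> (\<exists>h<m. 3*h+2 < m \<and> \<not> Cr (3*h+2) \<and> (\<forall>i<h. Cr (3*i+2)) \<and>
     (\<forall>j\<le>n. 3*j+2 < m \<and> (Cr (3*j+2) \<longleftrightarrow> j < h)) \<and>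
     (\<exists>a<m. 3*a < m \<and> Cr (3*a)) \<and> (\<exists>a<m. 3*a < m \<and> \<not> Cr (3*a)) \<and>
     3*n+2 < m \<and> ((\<forall>i\<le>n. Xr i \<longleftrightarrow> Cr (3*i)) \<or> (\<forall>i\<le>n. Xr i \<longleftrightarrow> Cr (3*i+1))) \<and>
     (\<forall>j\<le>n. \<exists>L<m. \<exists>v<m. 3*v+1 < m \<and> cert (cfst (cfst h)) (consc j 0) v L \<and> (Cr (3*j+1) \<longleftrightarrow> Cr (3*v))) \<and>
     (\<forall>j\<le>n. \<exists>L<m. \<exists>v<m. 3*v+1 < m \<and> cert (csnd (cfst h)) (consc j 0) v L \<and> (Cr (3*j) \<longleftrightarrow> Cr (3*v+1))))"

definition trc :: "nat \<Rightarrow> (nat \<Rightarrow> bool) \<Rightarrow> nat \<Rightarrow> bool" where "trc m X i \<longleftrightarrow> i < m \<and> X i"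

lemma Phi_anti: "Phi0 n m Xr Cr \<Longrightarrow> n' \<le> n \<Longrightarrow> Phi0 n' m Xr Cr"
proof -
  assume p: "Phi0 n m Xr Cr" and nn: "n' \<le> n"
  from p obtain h where h: "h < m" "3*h+2 < m" "\<not> Cr (3*h+2)" "\<forall>i<h. Cr (3*i+2)"
     "\<forall>j\<le>n. 3*j+2 < m \<and> (Cr (3*j+2) \<longleftrightarrow> j < h)"
     "\<exists>a<m. 3*a < m \<and> Cr (3*a)" "\<exists>a<m. 3*a < m \<and> \<not> Cr (3*a)"
     "3*n+2 < m" "(\<forall>i\<le>n. Xr i \<longleftrightarrow> Cr (3*i)) \<or> (\<forall>i\<le>n. Xr i \<longleftrightarrow> Cr (3*i+1))"
     "\<forall>j\<le>n. \<exists>L<m. \<exists>v<m. 3*v+1 < m \<and> cert (cfst (cfst h)) (consc j 0) v L \<and> (Cr (3*j+1) \<longleftrightarrow> Cr (3*v))"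
     "\<forall>j\<le>n. \<exists>L<m. \<exists>v<m. 3*v+1 < m \<and> cert (csnd (cfst h)) (consc j 0) v L \<and> (Cr (3*j) \<longleftrightarrow> Cr (3*v+1))"
    unfolding Phi0_def by blast
  have A: "(\<forall>i\<le>n'. Xr i \<longleftrightarrow> Cr (3*i)) \<or> (\<forall>i\<le>n'. Xr i \<longleftrightarrow> Cr (3*i+1))" using h(9) nn by auto
  have B: "\<forall>j\<le>n'. 3*j+2 < m \<and> (Cr (3*j+2) \<longleftrightarrow> j < h)" using h(5) nn by auto
  have C: "3*n'+2 < m" using h(8) nn by linarith
  have D: "\<forall>j\<le>n'. \<exists>L<m. \<exists>v<m. 3*v+1 < m \<and> cert (cfst (cfst h)) (consc j 0) v L \<and> (Cr (3*j+1) \<longleftrightarrow> Cr (3*v))"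
    using h(10) nn by (meson le_trans)
  have E: "\<forall>j\<le>n'. \<exists>L<m. \<exists>v<m. 3*v+1 < m \<and> cert (csnd (cfst h)) (consc j 0) v L \<and> (Cr (3*j) \<longleftrightarrow> Cr (3*v+1))"
    using h(11) nn by (meson le_trans)
  show ?thesis unfolding Phi0_def using h(1-4,6,7) A B C D E by blast
qed

lemma h_uniq: "\<not> C (3*(h::nat)+2) \<Longrightarrow> (\<forall>i<h. C (3*i+2)) \<Longrightarrow> \<not> C (3*h'+2) \<Longrightarrow> (\<forall>i<h'. C (3*i+2)) \<Longrightarrow> h = h'"
  by (metis linorder_neqE_nat)

definition Unp :: "nat \<Rightarrow> (nat \<Rightarrow> bool) \<Rightarrow> (nat \<Rightarrow> bool) \<Rightarrow> nat \<Rightarrow> bool" where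
  "Unp n X C h \<longleftrightarrow> \<not> C (3*h+2) \<and> (\<forall>i<h. C (3*i+2)) \<and> (\<forall>j\<le>n. C (3*j+2) \<longleftrightarrow> j < h) \<and>
     (\<exists>a. C (3*a)) \<and> (\<exists>a. \<not> C (3*a)) \<and>
     ((\<forall>i\<le>n. X i \<longleftrightarrow> C (3*i)) \<or> (\<forall>i\<le>n. X i \<longleftrightarrow> C (3*i+1))) \<and>
     (\<forall>j\<le>n. \<exists>v. ev (cfst (cfst h)) (consc j 0) v \<and> (C (3*j+1) \<longleftrightarrow> C (3*v))) \<and>
     (\<forall>j\<le>n. \<exists>v. ev (csnd (cfst h)) (consc j 0) v \<and> (C (3*j) \<longleftrightarrow> C (3*v+1)))"

lemma Phi_unpack:
  assumes "Phi0 n m (trc m X) (trc m C)"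
  shows "\<exists>h. Unp n X C h"
proof -
  from assms obtain h where h: "h < m" "3*h+2 < m" "\<not> trc m C (3*h+2)" "\<forall>i<h. trc m C (3*i+2)"
     "\<forall>j\<le>n. 3*j+2 < m \<and> (trc m C (3*j+2) \<longleftrightarrow> j < h)"
     "\<exists>a<m. 3*a < m \<and> trc m C (3*a)" "\<exists>a<m. 3*a < m \<and> \<not> trc m C (3*a)"
     "3*n+2 < m" "(\<forall>i\<le>n. trc m X i \<longleftrightarrow> trc m C (3*i)) \<or> (\<forall>i\<le>n. trc m X i \<longleftrightarrow> trc m C (3*i+1))"
     "\<forall>j\<le>n. \<exists>L<m. \<exists>v<m. 3*v+1 < m \<and> cert (cfst (cfst h)) (consc j 0) v L \<and> (trc m C (3*j+1) \<longleftrightarrow> trc m C (3*v))"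
     "\<forall>j\<le>n. \<exists>L<m. \<exists>v<m. 3*v+1 < m \<and> cert (csnd (cfst h)) (consc j 0) v L \<and> (trc m C (3*j) \<longleftrightarrow> trc m C (3*v+1))"
    unfolding Phi0_def by blast
  show ?thesis unfolding Unp_def
  proof (rule exI[of _ h], intro conjI)
    show "\<not> C (3*h+2)" using h(2,3) by (simp add: trc_def)
    show "\<forall>i<h. C (3*i+2)" using h(4) by (simp add: trc_def)
    show "\<forall>j\<le>n. C (3*j+2) \<longleftrightarrow> j < h" using h(5) by (auto simp: trc_def)
    show "\<exists>a. C (3*a)" using h(6) by (auto simp: trc_def)
    show "\<exists>a. \<not> C (3*a)" using h(7) by (auto simp: trc_def)
    have lt: "i \<le> n \<Longrightarrow> i < m \<and> 3*i < m \<and> 3*i+1 < m" for i using h(8) by linarith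
    show "(\<forall>i\<le>n. X i \<longleftrightarrow> C (3*i)) \<or> (\<forall>i\<le>n. X i \<longleftrightarrow> C (3*i+1))"
      using h(9) lt by (auto simp: trc_def)
    show "\<forall>j\<le>n. \<exists>v. ev (cfst (cfst h)) (consc j 0) v \<and> (C (3*j+1) \<longleftrightarrow> C (3*v))"
    proof (intro allI impI)
      fix j assume j: "j \<le> n"
      then obtain L v where "v < m" "3*v+1 < m" "cert (cfst (cfst h)) (consc j 0) v L" "trc m C (3*j+1) \<longleftrightarrow> trc m C (3*v)"
        using h(10) by blast
      then show "\<exists>v. ev (cfst (cfst h)) (consc j 0) v \<and> (C (3*j+1) \<longleftrightarrow> C (3*v))"
        using lt[OF j] by (intro exI[of _ v]) (auto simp: trc_def dest: cert_ev)
    qed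
    show "\<forall>j\<le>n. \<exists>v. ev (csnd (cfst h)) (consc j 0) v \<and> (C (3*j) \<longleftrightarrow> C (3*v+1))"
    proof (intro allI impI)
      fix j assume j: "j \<le> n"
      then obtain L v where "v < m" "3*v+1 < m" "cert (csnd (cfst h)) (consc j 0) v L" "trc m C (3*j) \<longleftrightarrow> trc m C (3*v+1)"
        using h(11) by blast
      then show "\<exists>v. ev (csnd (cfst h)) (consc j 0) v \<and> (C (3*j) \<longleftrightarrow> C (3*v+1))"
        using lt[OF j] by (intro exI[of _ v]) (auto simp: trc_def dest: cert_ev)
    qed
  qed
qed

lemma H_from:
  assumes A: "\<forall>n. \<exists>m. Phi0 n m (trc m X) (trc m C)"
  shows "Hrel X C"
proof -
  have "\<forall>n. \<exists>h. Unp n X C h"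
  proof
    fix n
    obtain m where "Phi0 n m (trc m X) (trc m C)" using A by blast
    then show "\<exists>h. Unp n X C h" by (rule Phi_unpack)
  qed
  from choice[OF this] obtain hf where hf0: "\<forall>n. Unp n X C (hf n)" by (elim exE)
  have hf: "Unp n X C (hf n)" for n using hf0 by (rule spec)
  define h where "h = hf 0"
  have Uh: "Unp n X C g \<Longrightarrow> \<not> C (3*g+2) \<and> (\<forall>i<g. C (3*i+2))" for n g by (simp add: Unp_def)
  have hh: "hf n = h" for n
    using Uh[OF hf[of n]] Uh[OF hf[of 0]] unfolding h_def by (intro h_uniq[of C]) (elim conjE, assumption)+
  have u: "Unp n X C h" for n using hf[of n] hh[of n] by simp
  show ?thesis unfolding Hrel_def
  proof (rule exI[of _ h], intro conjI)
    show "\<forall>i. C (3*i+2) \<longleftrightarrow> i < h" using u unfolding Unp_def by blast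
    show "\<exists>a. C (3*a)" using u[of 0] unfolding Unp_def by blast
    show "\<exists>a. \<not> C (3*a)" using u[of 0] unfolding Unp_def by blast
    show "(\<forall>i. X i \<longleftrightarrow> C (3*i)) \<or> (\<forall>i. X i \<longleftrightarrow> C (3*i+1))"
    proof (rule ccontr)
      assume "\<not> ((\<forall>i. X i \<longleftrightarrow> C (3*i)) \<or> (\<forall>i. X i \<longleftrightarrow> C (3*i+1)))"
      then obtain i1 i2 where i: "\<not> (X i1 \<longleftrightarrow> C (3*i1))" "\<not> (X i2 \<longleftrightarrow> C (3*i2+1))" by blast
      have "(\<forall>i\<le>max i1 i2. X i \<longleftrightarrow> C (3*i)) \<or> (\<forall>i\<le>max i1 i2. X i \<longleftrightarrow> C (3*i+1))"
        using u[of "max i1 i2"] unfolding Unp_def by blast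
      then show False using i by auto
    qed
    show "\<forall>j. \<exists>v. ev (cfst (cfst h)) (consc j 0) v \<and> (C (3*j+1) \<longleftrightarrow> C (3*v))"
      using u unfolding Unp_def by blast
    show "\<forall>j. \<exists>v. ev (csnd (cfst h)) (consc j 0) v \<and> (C (3*j) \<longleftrightarrow> C (3*v+1))"
      using u unfolding Unp_def by blast
  qed
qed

lemma le_sum_atMost: "j \<le> (n::nat) \<Longrightarrow> (f j::nat) \<le> (\<Sum>i\<le>n. f i)"
  by (rule member_le_sum) (simp_all)

lemma H_to:
  assumes H: "Hrel X C"
  shows "\<exists>m\<ge>k. Phi0 n m (trc m X) (trc m C)"
proof -
  obtain h a1 a0 where h: "\<forall>i. C (3*i+2) \<longleftrightarrow> i < h" and a: "C (3*a1)" "\<not> C (3*a0)"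
    and X: "(\<forall>i. X i \<longleftrightarrow> C (3*i)) \<or> (\<forall>i. X i \<longleftrightarrow> C (3*i+1))"
    and R1: "\<forall>j. \<exists>v. ev (cfst (cfst h)) (consc j 0) v \<and> (C (3*j+1) \<longleftrightarrow> C (3*v))"
    and R2: "\<forall>j. \<exists>v. ev (csnd (cfst h)) (consc j 0) v \<and> (C (3*j) \<longleftrightarrow> C (3*v+1))"
    using H unfolding Hrel_def by blast
  have "\<forall>j. \<exists>p. cert (cfst (cfst h)) (consc j 0) (fst p) (snd p) \<and> (C (3*j+1) \<longleftrightarrow> C (3*fst p))"
  proof
    fix j
    obtain v where v: "ev (cfst (cfst h)) (consc j 0) v" "C (3*j+1) \<longleftrightarrow> C (3*v)" using R1 by blast
    obtain L where "cert (cfst (cfst h)) (consc j 0) v L" using ev_cert[OF v(1)] by (elim exE)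
    then show "\<exists>p. cert (cfst (cfst h)) (consc j 0) (fst p) (snd p) \<and> (C (3*j+1) \<longleftrightarrow> C (3*fst p))"
      using v(2) by (intro exI[of _ "(v, L)"]) simp
  qed
  then obtain p1 where p1: "\<And>j. cert (cfst (cfst h)) (consc j 0) (fst (p1 j)) (snd (p1 j)) \<and> (C (3*j+1) \<longleftrightarrow> C (3*fst (p1 j)))"
    by metis
  have "\<forall>j. \<exists>p. cert (csnd (cfst h)) (consc j 0) (fst p) (snd p) \<and> (C (3*j) \<longleftrightarrow> C (3*fst p+1))"
  proof
    fix j
    obtain v where v: "ev (csnd (cfst h)) (consc j 0) v" "C (3*j) \<longleftrightarrow> C (3*v+1)" using R2 by blast
    obtain L where "cert (csnd (cfst h)) (consc j 0) v L" using ev_cert[OF v(1)] by (elim exE)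
    then show "\<exists>p. cert (csnd (cfst h)) (consc j 0) (fst p) (snd p) \<and> (C (3*j) \<longleftrightarrow> C (3*fst p+1))"
      using v(2) by (intro exI[of _ "(v, L)"]) simp
  qed
  then obtain p2 where p2: "\<And>j. cert (csnd (cfst h)) (consc j 0) (fst (p2 j)) (snd (p2 j)) \<and> (C (3*j) \<longleftrightarrow> C (3*fst (p2 j)+1))"
    by metis
  define S where "S = (\<Sum>j\<le>n. snd (p1 j) + snd (p2 j) + 3 * fst (p1 j) + 3 * fst (p2 j))"
  define m where "m = k + 3*h + 3*a1 + 3*a0 + 3*n + S + 3"
  have sb: "j \<le> n \<Longrightarrow> snd (p1 j) + snd (p2 j) + 3 * fst (p1 j) + 3 * fst (p2 j) \<le> S" for j
    unfolding S_def by (rule le_sum_atMost)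
  have tr: "i < m \<Longrightarrow> trc m C i = C i" "i < m \<Longrightarrow> trc m X i = X i" for i by (simp_all add: trc_def)
  have "Phi0 n m (trc m X) (trc m C)"
    unfolding Phi0_def
  proof (rule exI[of _ h], intro conjI)
    show "h < m" "3*h+2 < m" "3*n+2 < m" unfolding m_def by linarith+
    show "\<not> trc m C (3*h+2)" using h by (simp add: trc_def)
    show "\<forall>i<h. trc m C (3*i+2)" using h unfolding trc_def m_def by auto
    show "\<forall>j\<le>n. 3*j+2 < m \<and> (trc m C (3*j+2) \<longleftrightarrow> j < h)" using h unfolding trc_def m_def by auto
    show "\<exists>a<m. 3*a < m \<and> trc m C (3*a)" using a(1) unfolding trc_def m_def
      by (intro exI[of _ a1]) auto
    show "\<exists>a<m. 3*a < m \<and> \<not> trc m C (3*a)" using a(2) unfolding trc_def m_def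
      by (intro exI[of _ a0]) auto
    show "(\<forall>i\<le>n. trc m X i \<longleftrightarrow> trc m C (3*i)) \<or> (\<forall>i\<le>n. trc m X i \<longleftrightarrow> trc m C (3*i+1))"
      using X unfolding trc_def m_def by auto
    show "\<forall>j\<le>n. \<exists>L<m. \<exists>v<m. 3*v+1 < m \<and> cert (cfst (cfst h)) (consc j 0) v L \<and> (trc m C (3*j+1) \<longleftrightarrow> trc m C (3*v))"
    proof (intro allI impI)
      fix j assume j: "j \<le> n"
      have b: "snd (p1 j) < m" "fst (p1 j) < m" "3 * fst (p1 j) + 1 < m" "3*j+1 < m"
        using sb[OF j] j unfolding m_def by linarith+
      show "\<exists>L<m. \<exists>v<m. 3*v+1 < m \<and> cert (cfst (cfst h)) (consc j 0) v L \<and> (trc m C (3*j+1) \<longleftrightarrow> trc m C (3*v))"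
        using p1[of j] b by (intro exI[of _ "snd (p1 j)"] conjI exI[of _ "fst (p1 j)"]) (simp_all add: trc_def)
    qed
    show "\<forall>j\<le>n. \<exists>L<m. \<exists>v<m. 3*v+1 < m \<and> cert (csnd (cfst h)) (consc j 0) v L \<and> (trc m C (3*j) \<longleftrightarrow> trc m C (3*v+1))"
    proof (intro allI impI)
      fix j assume j: "j \<le> n"
      have b: "snd (p2 j) < m" "fst (p2 j) < m" "3 * fst (p2 j) + 1 < m" "3*j+1 < m"
        using sb[OF j] j unfolding m_def by linarith+
      show "\<exists>L<m. \<exists>v<m. 3*v+1 < m \<and> cert (csnd (cfst h)) (consc j 0) v L \<and> (trc m C (3*j) \<longleftrightarrow> trc m C (3*v+1))"
        using p2[of j] b by (intro exI[of _ "snd (p2 j)"] conjI exI[of _ "fst (p2 j)"]) (simp_all add: trc_def)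
    qed
  qed
  moreover have "k \<le> m" unfolding m_def by simp
  ultimately show ?thesis by blast
qed

definition Gr :: "((nat \<Rightarrow> bool) \<times> (nat \<Rightarrow> bool)) set" where
  "Gr = {(X, Y). X \<noteq> Y \<and> (Hrel X Y \<or> Hrel Y X)}"

definition PsiC :: "nat \<Rightarrow> nat \<Rightarrow> nat \<Rightarrow> bool" where
  "PsiC n a b \<longleftrightarrow> (\<exists>i<plen a. rd a i \<noteq> rd b i) \<and>
     (Phi0 n (plen a) (rd a) (rd b) \<or> Phi0 n (plen a) (rd b) (rd a))"

lemma rd_pc': "rd (prefix_code X m) = trc m X"
  by (simp add: rd_pc trc_def[abs_def])

lemma PsiC_pc: "PsiC n (prefix_code X m) (prefix_code Y m) \<longleftrightarrow>
   (\<exists>i<m. X i \<noteq> Y i) \<and> (Phi0 n m (trc m X) (trc m Y) \<or> Phi0 n m (trc m Y) (trc m X))"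
  unfolding PsiC_def plen_pc rd_pc' by (auto simp: trc_def)

lemma Gr_char: "(X, Y) \<in> Gr \<longleftrightarrow> (\<forall>n. \<exists>m. PsiC n (prefix_code X m) (prefix_code Y m))"
proof
  assume "(X, Y) \<in> Gr"
  then have ne: "X \<noteq> Y" and H: "Hrel X Y \<or> Hrel Y X" by (auto simp: Gr_def)
  from ne obtain i0 where i0: "X i0 \<noteq> Y i0" using HOL.ext[of X Y] by blast
  show "\<forall>n. \<exists>m. PsiC n (prefix_code X m) (prefix_code Y m)"
  proof
    fix n
    from H have "\<exists>m\<ge>Suc i0. Phi0 n m (trc m X) (trc m Y) \<or> Phi0 n m (trc m Y) (trc m X)"
      using H_to by blast
    then obtain m where m: "m \<ge> Suc i0" "Phi0 n m (trc m X) (trc m Y) \<or> Phi0 n m (trc m Y) (trc m X)" by blast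
    have "\<exists>i<m. X i \<noteq> Y i" using i0 m(1) by (intro exI[of _ i0]) auto
    then show "\<exists>m. PsiC n (prefix_code X m) (prefix_code Y m)"
      using m(2) by (intro exI[of _ m]) (simp add: PsiC_pc)
  qed
next
  assume A: "\<forall>n. \<exists>m. PsiC n (prefix_code X m) (prefix_code Y m)"
  then obtain m0 where "PsiC 0 (prefix_code X m0) (prefix_code Y m0)" by blast
  then have ne: "X \<noteq> Y" by (auto simp: PsiC_pc)
  have "Hrel X Y \<or> Hrel Y X"
  proof (rule ccontr)
    assume "\<not> (Hrel X Y \<or> Hrel Y X)"
    then have n1: "\<not> Hrel X Y" and n2: "\<not> Hrel Y X" by auto
    from n1 H_from obtain n0 where n0: "\<forall>m. \<not> Phi0 n0 m (trc m X) (trc m Y)" by blast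
    from n2 H_from obtain n1 where n1: "\<forall>m. \<not> Phi0 n1 m (trc m Y) (trc m X)" by blast
    obtain m where "PsiC (max n0 n1) (prefix_code X m) (prefix_code Y m)" using A by blast
    then have "Phi0 (max n0 n1) m (trc m X) (trc m Y) \<or> Phi0 (max n0 n1) m (trc m Y) (trc m X)"
      by (simp add: PsiC_pc)
    then show False
    proof
      assume "Phi0 (max n0 n1) m (trc m X) (trc m Y)"
      then have "Phi0 n0 m (trc m X) (trc m Y)" by (rule Phi_anti) simp
      then show False using n0 by blast
    next
      assume "Phi0 (max n0 n1) m (trc m Y) (trc m X)"
      then have "Phi0 n1 m (trc m Y) (trc m X)" by (rule Phi_anti) simp
      then show False using n1 by blast
    qed
  qed
  then show "(X, Y) \<in> Gr" using ne by (simp add: Gr_def)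
qed

lemma dec_PsiC: "dec (\<lambda>p. PsiC (cfst p) (cfst (csnd p)) (csnd (csnd p)))"
  unfolding PsiC_def Phi0_def
  by (intro c_all dec_rd c_plen dec_cert)

lemma tr3: "total_rec 3 (\<lambda>xs. cpair (xs!0) (cpair (xs!1) (xs!2)))"
  using tr_comp2[where f=cpair, OF tr_cpair tr_proj[of 0 3] tr_comp2[where f=cpair, OF tr_cpair tr_proj[of 1 3] tr_proj[of 2 3]]]
  by simp

lemma Pi02_Gr: "Pi02_pairs Gr"
proof -
  define F where "F = (\<lambda>p. if PsiC (cfst p) (cfst (csnd p)) (csnd (csnd p)) then 0 else (1::nat))"
  have "computable F" unfolding F_def by (intro c_if dec_PsiC c_const)
  then have "total_rec 1 (\<lambda>ys. F (hd ys))" by (simp add: computable_def)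
  from tr_comp1[OF this tr3] have r: "total_rec 3 (\<lambda>xs. F (cpair (xs!0) (cpair (xs!1) (xs!2))))" .
  show ?thesis unfolding Pi02_pairs_def
  proof (rule exI, rule conjI[OF r], intro allI)
    fix X Y
    show "(X, Y) \<in> Gr \<longleftrightarrow> (\<forall>n. \<exists>m. F (cpair ([n, prefix_code X m, prefix_code Y m] ! 0)
       (cpair ([n, prefix_code X m, prefix_code Y m] ! 1) ([n, prefix_code X m, prefix_code Y m] ! 2))) = 0)"
      unfolding Gr_char by (simp add: F_def)
  qed
qed

lemma mr_via: "computable f \<Longrightarrow> (\<And>n. A n \<longleftrightarrow> B (f n)) \<Longrightarrow> m_reduces A B"
  unfolding m_reduces_def by blast

lemma mr_refl: "m_reduces A A"
  by (rule mr_via[OF c_id]) simp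

lemma mr_trans: "m_reduces A B \<Longrightarrow> m_reduces B C \<Longrightarrow> m_reduces A C"
proof -
  assume "m_reduces A B" "m_reduces B C"
  then obtain f g where f: "computable f" "\<And>n. A n \<longleftrightarrow> B (f n)" and g: "computable g" "\<And>n. B n \<longleftrightarrow> C (g n)"
    unfolding m_reduces_def by blast
  show ?thesis by (rule mr_via[OF c_comp[OF g(1) f(1)]]) (simp add: f(2) g(2))
qed

lemma me_refl: "m_equiv A A" by (simp add: m_equiv_def mr_refl)
lemma me_sym: "m_equiv A B \<Longrightarrow> m_equiv B A" by (simp add: m_equiv_def)
lemma me_trans: "m_equiv A B \<Longrightarrow> m_equiv B C \<Longrightarrow> m_equiv A C"
  unfolding m_equiv_def using mr_trans by blast

lemma run_prop:
  assumes "\<forall>j. \<exists>v. ev e (consc j 0) v \<and> P j v"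
  shows "computable (run e) \<and> (\<forall>j. P j (run e j))"
proof
  have tot: "\<exists>v. ev e (consc j 0) v" for j using assms by blast
  show "computable (run e)" by (rule c_run[OF tot])
  show "\<forall>j. P j (run e j)"
  proof
    fix j
    obtain v where v: "ev e (consc j 0) v" "P j v" using assms by blast
    have "ev e (consc j 0) (run e j)" by (rule run_ev[OF tot])
    with v(1) have "v = run e j" by (rule ev_det)
    with v(2) show "P j (run e j)" by simp
  qed
qed

lemma mod3_cases: "(k::nat) mod 3 = 0 \<or> k mod 3 = 1 \<or> k mod 3 = 2" by arith

lemma m3a: "Suc (3*i) mod 3 = 1" "Suc (3*i) div 3 = i" "Suc (Suc (3*i)) mod 3 = 2" "Suc (Suc (3*i)) div 3 = (i::nat)"
  by presburger+

lemma div3_cases: "(k::nat) = 3*(k div 3) \<or> k = Suc (3*(k div 3)) \<or> k = Suc (Suc (3*(k div 3)))"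
  by presburger

lemma Hrel_equiv: "Hrel X C \<Longrightarrow> m_equiv X C"
proof -
  assume H: "Hrel X C"
  obtain h a1 a0 where h: "\<forall>i. C (3*i+2) \<longleftrightarrow> i < h" and a: "C (3*a1)" "\<not> C (3*a0)"
    and X: "(\<forall>i. X i \<longleftrightarrow> C (3*i)) \<or> (\<forall>i. X i \<longleftrightarrow> C (3*i+1))"
    and R1: "\<forall>j. \<exists>v. ev (cfst (cfst h)) (consc j 0) v \<and> (C (3*j+1) \<longleftrightarrow> C (3*v))"
    and R2: "\<forall>j. \<exists>v. ev (csnd (cfst h)) (consc j 0) v \<and> (C (3*j) \<longleftrightarrow> C (3*v+1))"
    using H unfolding Hrel_def by blast
  define f1 where "f1 = run (cfst (cfst h))"
  define f2 where "f2 = run (csnd (cfst h))"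
  have f1: "computable f1" "\<And>j. C (3*j+1) \<longleftrightarrow> C (3 * f1 j)"
    using run_prop[OF R1] unfolding f1_def by blast+
  have f2: "computable f2" "\<And>j. C (3*j) \<longleftrightarrow> C (3 * f2 j + 1)"
    using run_prop[OF R2] unfolding f2_def by blast+
  define A where "A = (\<lambda>i. C (3*i))"
  define B where "B = (\<lambda>i. C (3*i+1))"
  have AC: "m_reduces A C" by (rule mr_via[where f="\<lambda>i. 3*i"]) (intro c_all, simp add: A_def)
  have f1': "C (Suc (3*j)) \<longleftrightarrow> C (3 * f1 j)" for j using f1(2)[of j] by simp
  have BA: "m_reduces B A" by (rule mr_via[OF f1(1)]) (simp add: A_def B_def f1')
  have f2': "C (3*j) \<longleftrightarrow> C (Suc (3 * f2 j))" for j using f2(2)[of j] by simp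
  have AB: "m_reduces A B" by (rule mr_via[OF f2(1)]) (simp add: A_def B_def f2')
  define g where "g = (\<lambda>k. if k mod 3 = 0 then k div 3 else if k mod 3 = 1 then f1 (k div 3)
     else if k div 3 < h then a1 else a0)"
  have gc: "computable g" unfolding g_def by (intro c_all c_comp[OF f1(1)])
  have CA: "m_reduces C A"
  proof (rule mr_via[OF gc])
    fix k :: nat
    define q where "q = k div 3"
    consider "k = 3*q" | "k = Suc (3*q)" | "k = Suc (Suc (3*q))" using div3_cases[of k] unfolding q_def by blast
    then show "C k \<longleftrightarrow> A (g k)"
    proof cases
      case 1 then show ?thesis by (simp add: g_def A_def)
    next
      case 2 then show ?thesis using f1' by (simp add: g_def A_def m3a)
    next
      case 3 then show ?thesis using h a by (simp add: g_def A_def m3a)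
    qed
  qed
  have eA: "m_equiv A C" using AC CA by (simp add: m_equiv_def)
  have eB: "m_equiv B C" using me_trans[of B A C] AB BA eA by (simp add: m_equiv_def)
  from X have "X = A \<or> X = B" unfolding A_def B_def by (auto intro: HOL.ext)
  then show ?thesis using eA eB by blast
qed

lemma code_of: "computable g \<Longrightarrow> \<exists>e. \<forall>j. ev e (consc j 0) (g j)"
proof -
  assume "computable g"
  then have "total_rec 1 (\<lambda>xs. g (hd xs))" by (simp add: computable_def)
  from compile[OF this] obtain e where e: "\<forall>xs. length xs = 1 \<longrightarrow> ev e (list_encode xs) (g (hd xs))" by blast
  have "ev e (consc j 0) (g j)" for j
  proof -
    have "consc j 0 = list_encode [j]" using consc_enc[of j "[]"] by simp
    then show ?thesis using e[rule_format, of "[j]"] by simp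
  qed
  then show ?thesis by blast
qed

definition Ck :: "(nat \<Rightarrow> bool) \<Rightarrow> (nat \<Rightarrow> bool) \<Rightarrow> nat \<Rightarrow> nat \<Rightarrow> nat \<Rightarrow> nat \<Rightarrow> bool" where
  "Ck A B e1 e2 k i = (if i mod 3 = 0 then A (i div 3) else if i mod 3 = 1 then B (i div 3)
      else i div 3 < cpair (cpair e1 e2) k)"

lemma Ck1'[simp]: "Ck A B e1 e2 k (Suc (3*i)) = B i" by (simp add: Ck_def m3a)
lemma Ck2'[simp]: "Ck A B e1 e2 k (Suc (Suc (3*i))) = (i < cpair (cpair e1 e2) k)" by (simp add: Ck_def m3a)
lemma Ck0[simp]: "Ck A B e1 e2 k (3*i) = A i" by (simp add: Ck_def)
lemma Ck1: "Ck A B e1 e2 k (3*i+1) = B i" by simp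
lemma Ck2: "Ck A B e1 e2 k (3*i+2) = (i < cpair (cpair e1 e2) k)" by simp

lemma Ck_inj: "Ck A B e1 e2 k = Ck A B e1 e2 k' \<Longrightarrow> k = k'"
proof -
  assume eq: "Ck A B e1 e2 k = Ck A B e1 e2 k'"
  have "\<forall>i. (i < cpair (cpair e1 e2) k) = (i < cpair (cpair e1 e2) k')"
    using eq by (metis Ck2)
  then have "cpair (cpair e1 e2) k = cpair (cpair e1 e2) k'" by (metis less_irrefl linorder_neqE_nat)
  then show "k = k'" by simp
qed

lemma common_nb: "m_equiv A B \<Longrightarrow> A \<noteq> B \<Longrightarrow> \<exists>C. (A, C) \<in> Gr \<and> (C, B) \<in> Gr"
proof -
  assume me: "m_equiv A B" and ne: "A \<noteq> B"
  obtain f g where f: "computable f" "\<And>n. A n \<longleftrightarrow> B (f n)" and g: "computable g" "\<And>n. B n \<longleftrightarrow> A (g n)"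
    using me unfolding m_equiv_def m_reduces_def by blast
  obtain e1 where e1: "\<forall>j. ev e1 (consc j 0) (g j)" using code_of[OF g(1)] by blast
  obtain e2 where e2: "\<forall>j. ev e2 (consc j 0) (f j)" using code_of[OF f(1)] by blast
  have a1: "\<exists>a. A a"
  proof (rule ccontr)
    assume "\<not> (\<exists>a. A a)"
    then have "A = (\<lambda>_. False)" "B = (\<lambda>_. False)" using g(2) by (auto intro: HOL.ext)
    then show False using ne by simp
  qed
  have a0: "\<exists>a. \<not> A a"
  proof (rule ccontr)
    assume "\<not> (\<exists>a. \<not> A a)"
    then have "A = (\<lambda>_. True)" "B = (\<lambda>_. True)" using g(2) by (auto intro: HOL.ext)
    then show False using ne by simp
  qed
  have HA: "Hrel A (Ck A B e1 e2 k)" for k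
    unfolding Hrel_def
  proof (rule exI[of _ "cpair (cpair e1 e2) k"], intro conjI)
    show "\<forall>i. Ck A B e1 e2 k (3*i+2) \<longleftrightarrow> i < cpair (cpair e1 e2) k" by simp
    show "\<exists>a. Ck A B e1 e2 k (3*a)" using a1 by simp
    show "\<exists>a. \<not> Ck A B e1 e2 k (3*a)" using a0 by simp
    show "(\<forall>i. A i \<longleftrightarrow> Ck A B e1 e2 k (3*i)) \<or> (\<forall>i. A i \<longleftrightarrow> Ck A B e1 e2 k (3*i+1))" by simp
    show "\<forall>j. \<exists>v. ev (cfst (cfst (cpair (cpair e1 e2) k))) (consc j 0) v \<and> (Ck A B e1 e2 k (3*j+1) \<longleftrightarrow> Ck A B e1 e2 k (3*v))"
    proof
      fix j show "\<exists>v. ev (cfst (cfst (cpair (cpair e1 e2) k))) (consc j 0) v \<and> (Ck A B e1 e2 k (3*j+1) \<longleftrightarrow> Ck A B e1 e2 k (3*v))"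
        using e1 g(2) by (intro exI[of _ "g j"]) simp
    qed
    show "\<forall>j. \<exists>v. ev (csnd (cfst (cpair (cpair e1 e2) k))) (consc j 0) v \<and> (Ck A B e1 e2 k (3*j) \<longleftrightarrow> Ck A B e1 e2 k (3*v+1))"
    proof
      fix j show "\<exists>v. ev (csnd (cfst (cpair (cpair e1 e2) k))) (consc j 0) v \<and> (Ck A B e1 e2 k (3*j) \<longleftrightarrow> Ck A B e1 e2 k (3*v+1))"
        using e2 f(2) by (intro exI[of _ "f j"]) simp
    qed
  qed
  have HB: "Hrel B (Ck A B e1 e2 k)" for k
    unfolding Hrel_def
  proof (rule exI[of _ "cpair (cpair e1 e2) k"], intro conjI)
    show "\<forall>i. Ck A B e1 e2 k (3*i+2) \<longleftrightarrow> i < cpair (cpair e1 e2) k" by simp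
    show "\<exists>a. Ck A B e1 e2 k (3*a)" using a1 by simp
    show "\<exists>a. \<not> Ck A B e1 e2 k (3*a)" using a0 by simp
    show "(\<forall>i. B i \<longleftrightarrow> Ck A B e1 e2 k (3*i)) \<or> (\<forall>i. B i \<longleftrightarrow> Ck A B e1 e2 k (3*i+1))" by simp
    show "\<forall>j. \<exists>v. ev (cfst (cfst (cpair (cpair e1 e2) k))) (consc j 0) v \<and> (Ck A B e1 e2 k (3*j+1) \<longleftrightarrow> Ck A B e1 e2 k (3*v))"
    proof
      fix j show "\<exists>v. ev (cfst (cfst (cpair (cpair e1 e2) k))) (consc j 0) v \<and> (Ck A B e1 e2 k (3*j+1) \<longleftrightarrow> Ck A B e1 e2 k (3*v))"
        using e1 g(2) by (intro exI[of _ "g j"]) simp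
    qed
    show "\<forall>j. \<exists>v. ev (csnd (cfst (cpair (cpair e1 e2) k))) (consc j 0) v \<and> (Ck A B e1 e2 k (3*j) \<longleftrightarrow> Ck A B e1 e2 k (3*v+1))"
    proof
      fix j show "\<exists>v. ev (csnd (cfst (cpair (cpair e1 e2) k))) (consc j 0) v \<and> (Ck A B e1 e2 k (3*j) \<longleftrightarrow> Ck A B e1 e2 k (3*v+1))"
        using e2 f(2) by (intro exI[of _ "f j"]) simp
    qed
  qed
  have d: "Ck A B e1 e2 0 \<noteq> Ck A B e1 e2 1" "Ck A B e1 e2 0 \<noteq> Ck A B e1 e2 2" "Ck A B e1 e2 1 \<noteq> Ck A B e1 e2 2"
    using Ck_inj[of A B e1 e2 0 1] Ck_inj[of A B e1 e2 0 2] Ck_inj[of A B e1 e2 1 2] by auto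
  have "\<exists>k. Ck A B e1 e2 k \<noteq> A \<and> Ck A B e1 e2 k \<noteq> B"
  proof (rule ccontr)
    assume "\<not> (\<exists>k. Ck A B e1 e2 k \<noteq> A \<and> Ck A B e1 e2 k \<noteq> B)"
    then have "\<forall>k. Ck A B e1 e2 k = A \<or> Ck A B e1 e2 k = B" by blast
    then have "(Ck A B e1 e2 0 = A \<or> Ck A B e1 e2 0 = B) \<and> (Ck A B e1 e2 1 = A \<or> Ck A B e1 e2 1 = B) \<and>
      (Ck A B e1 e2 2 = A \<or> Ck A B e1 e2 2 = B)" by blast
    then show False using d by auto
  qed
  then obtain k where k: "Ck A B e1 e2 k \<noteq> A" "Ck A B e1 e2 k \<noteq> B" by blast
  have "(A, Ck A B e1 e2 k) \<in> Gr" using HA[of k] k by (auto simp: Gr_def)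
  moreover have "(Ck A B e1 e2 k, B) \<in> Gr" using HB[of k] k by (auto simp: Gr_def)
  ultimately show ?thesis by blast
qed

lemma Gr_equiv: "(X, Y) \<in> Gr \<Longrightarrow> m_equiv X Y"
  unfolding Gr_def using Hrel_equiv me_sym by blast

lemma Gr_star: "Gr\<^sup>* = {(x, y). m_equiv x y}"
proof (intro equalityI subsetI)
  fix p assume "p \<in> Gr\<^sup>*"
  then obtain x y where p: "p = (x, y)" "(x, y) \<in> Gr\<^sup>*" by (cases p) auto
  from p(2) have "m_equiv x y"
  proof (induction rule: rtrancl_induct)
    case base then show ?case by (rule me_refl)
  next
    case (step y z) then show ?case using Gr_equiv me_trans by blast
  qed
  then show "p \<in> {(x, y). m_equiv x y}" using p by simp
next
  fix p assume "p \<in> {(x, y). m_equiv x y}"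
  then obtain x y where p: "p = (x, y)" "m_equiv x y" by auto
  show "p \<in> Gr\<^sup>*"
  proof (cases "x = y")
    case True then show ?thesis using p by simp
  next
    case False
    then obtain C where "(x, C) \<in> Gr" "(C, y) \<in> Gr" using common_nb p(2) by blast
    then show ?thesis using p by (meson converse_rtrancl_into_rtrancl r_into_rtrancl)
  qed
qed

theorem theorem4p2:
  shows "Pi02_graphable_diam m_equiv 2"
  unfolding Pi02_graphable_diam_def
proof (intro exI[of _ Gr] conjI)
  show "Pi02_pairs Gr" by (rule Pi02_Gr)
  show "simple_graph Gr" unfolding simple_graph_def sym_def irrefl_def Gr_def by auto
  show "Gr\<^sup>* = {(x, y). m_equiv x y}" by (rule Gr_star)
  have db2: "diam_bounded Gr 2"
    unfolding diam_bounded_def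
  proof (intro allI impI)
    fix x y assume "(x, y) \<in> Gr\<^sup>*"
    then have me: "m_equiv x y" using Gr_star by simp
    show "\<exists>j\<le>2. (x, y) \<in> Gr ^^ j"
    proof (cases "x = y")
      case True then show ?thesis by (intro exI[of _ 0]) simp
    next
      case False
      then obtain C where "(x, C) \<in> Gr" "(C, y) \<in> Gr" using common_nb me by blast
      then have "(x, y) \<in> Gr O Gr" by blast
      then have "(x, y) \<in> Gr ^^ 2" by (simp add: numeral_2_eq_2)
      then show ?thesis by (intro exI[of _ 2]) simp
    qed
  qed
  define A0 where "A0 = (\<lambda>i::nat. i = 1)"
  define B0 where "B0 = (\<lambda>i::nat. i = 2)"
  have r1: "m_reduces A0 B0"
    by (rule mr_via[where f="\<lambda>n. if n = 1 then 2 else 0"]) (intro c_all, simp add: A0_def B0_def)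
  have r2: "m_reduces B0 A0"
    by (rule mr_via[where f="\<lambda>n. if n = 2 then 1 else 0"]) (intro c_all, simp add: A0_def B0_def)
  have conn: "(A0, B0) \<in> Gr\<^sup>*" using Gr_star r1 r2 by (simp add: m_equiv_def)
  have neq: "A0 \<noteq> B0"
  proof
    assume "A0 = B0"
    then have "A0 1 = B0 1" by simp
    then show False by (simp add: A0_def B0_def)
  qed
  have t1: "\<not> (\<exists>a. (3*a::nat) = 1)" by presburger
  have t2: "\<not> (\<exists>a. (3*a::nat) = 2)" by presburger
  have nA: "\<not> Hrel X A0" for X unfolding Hrel_def A0_def using t1 by blast
  have nB: "\<not> Hrel X B0" for X unfolding Hrel_def B0_def using t2 by blast
  have notG: "(A0, B0) \<notin> Gr" using nA nB by (simp add: Gr_def)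
  have nb: "\<not> diam_bounded Gr k'" if "k' < 2" for k'
  proof
    assume "diam_bounded Gr k'"
    then obtain j where j: "j \<le> k'" "(A0, B0) \<in> Gr ^^ j" using conn unfolding diam_bounded_def by blast
    then have "j = 0 \<or> j = 1" using that by linarith
    then show False using j(2) neq notG by auto
  qed
  show "has_diameter Gr 2" unfolding has_diameter_def using db2 nb by blast
qed

end
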